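(* Let $\rho$ be an $N$-qubit density matrix and let $O_1,\dots,O_L$ be Hermitian $N$-qubit observables with operator norm $\|O_l\|_\infty=1$, each acting nontrivially on at most $K$ qubits (i.e. $O_l=O_{l,\mathsf K_l}\otimes\mathbb I_{\neg\mathsf K_l}$ with $|\mathsf K_l|\le K$). Fix $\epsilon,\delta\in(0,1)$. If $\hat\sigma_1,\dots,\hat\sigma_M$ are independent SIC POVM classical shadows of $\rho$ with $M\ge\tfrac83\,6^K\log(2L/\delta)/\epsilon^2$, then with probability at least $1-\delta$, $\big|\frac1M\sum_{m=1}^M\mathrm{tr}(O_l\hat\sigma_m)-\mathrm{tr}(O_l\rho)\big|\le\epsilon$ holds simultaneously for all $l=1,\dots,L$.
   Context: Let $|\psi_1\rangle,\dots,|\psi_4\rangle\in\mathbb C^2$ be unit vectors forming a single-qubit SIC set, i.e. $|\langle\psi_i|\psi_j\rangle|^2=1/3$ for all $i\neq j$; then $\{\tfrac12|\psi_i\rangle\langle\psi_i|\}_{i=1}^4$ is a POVM. Performing this measurement on each qubit of an $N$-qubit state $\rho$ yields an outcome string $(i_1,\dots,i_N)\in\{1,2,3,4\}^N$ with probability $\Pr[i_1\cdots i_N\mid\rho]=2^{-N}\langle\psi_{i_1}\otimes\cdots\otimes\psi_{i_N}|\,\rho\,|\psi_{i_1}\otimes\cdots\otimes\psi_{i_N}\rangle$. The SIC POVM classical shadow associated with this outcome is $\hat\sigma=\bigotimes_{n=1}^N\big(3|\psi_{i_n}\rangle\langle\psi_{i_n}|-\mathbb I\big)$. $\log$ is the natural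 logarithm. *)

theory Defs
  imports Complex_Main "Jordan_Normal_Form.Matrix"
begin

text \<open>N-qubit operators are complex (2^N x 2^N) matrices. The computational basis index
  i < 2^N encodes qubit n by bit n of i.\<close>

definition qbit :: "nat \<Rightarrow> nat \<Rightarrow> nat" where
  "qbit n i = (i div 2 ^ n) mod 2"

definition dagger :: "complex mat \<Rightarrow> complex mat" where
  "dagger A = mat (dim_col A) (dim_row A) (\<lambda>(i, j). cnj (A $$ (j, i)))"

definition ctrace :: "complex mat \<Rightarrow> complex" where
  "ctrace A = (\<Sum>i<dim_row A. A $$ (i, i))"

definition hermitian :: "complex mat \<Rightarrow> bool" where
  "hermitian A \<longleftrightarrow> dim_row A = dim_col A \<and> dagger A = A"

definition vnorm :: "complex vec \<Rightarrow> real" where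
  "vnorm v = sqrt (\<Sum>i<dim_vec v. (cmod (v $ i))\<^sup>2)"

definition opnorm :: "complex mat \<Rightarrow> real" where
  "opnorm A = Sup {vnorm (A *\<^sub>v v) | v. v \<in> carrier_vec (dim_col A) \<and> vnorm v = 1}"

text \<open>Density matrix on N qubits: Hermitian, positive semidefinite, unit trace.
  Note: v \<bullet>c w = sum_i v_i * cnj (w_i), so (A v) \<bullet>c v = <v|A|v>.\<close>
definition density_matrix :: "nat \<Rightarrow> complex mat \<Rightarrow> bool" where
  "density_matrix N \<rho> \<longleftrightarrow> \<rho> \<in> carrier_mat (2 ^ N) (2 ^ N) \<and> hermitian \<rho> \<and>
     (\<forall>v \<in> carrier_vec (2 ^ N). Im ((\<rho> *\<^sub>v v) \<bullet>c v) = 0 \<and> Re ((\<rho> *\<^sub>v v) \<bullet>c v) \<ge> 0) \<and>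
     ctrace \<rho> = 1"

definition restr_bits :: "nat set \<Rightarrow> nat \<Rightarrow> nat \<Rightarrow> bool" where
  "restr_bits S i = (\<lambda>n. n \<in> S \<and> qbit n i = 1)"

text \<open>O = O_S \<otimes> I on the complement of S: the matrix entries are those of an arbitrary
  operator O_S (indexed by bit assignments of the qubits in S) times the identity on the
  remaining qubits.\<close>
definition acts_on :: "nat \<Rightarrow> nat set \<Rightarrow> complex mat \<Rightarrow> bool" where
  "acts_on N S A \<longleftrightarrow> S \<subseteq> {0..<N} \<and>
     (\<exists>(OS :: (nat \<Rightarrow> bool) \<Rightarrow> (nat \<Rightarrow> bool) \<Rightarrow> complex).
        A = mat (2 ^ N) (2 ^ N) (\<lambda>(i, j).
              if (\<forall>n \<in> {0..<N} - S. qbit n i = qbit n j)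
              then OS (restr_bits S i) (restr_bits S j) else 0))"

definition acts_on_at_most :: "nat \<Rightarrow> nat \<Rightarrow> complex mat \<Rightarrow> bool" where
  "acts_on_at_most N K A \<longleftrightarrow> (\<exists>S. card S \<le> K \<and> acts_on N S A)"

definition tensor_ops :: "nat \<Rightarrow> (nat \<Rightarrow> complex mat) \<Rightarrow> complex mat" where
  "tensor_ops N A = mat (2 ^ N) (2 ^ N) (\<lambda>(i, j). \<Prod>n<N. A n $$ (qbit n i, qbit n j))"

definition tensor_vecs :: "nat \<Rightarrow> (nat \<Rightarrow> complex vec) \<Rightarrow> complex vec" where
  "tensor_vecs N v = vec (2 ^ N) (\<lambda>i. \<Prod>n<N. v n $ qbit n i)"

definition proj :: "complex vec \<Rightarrow> complex mat" where
  "proj \<psi> = mat 2 2 (\<lambda>(a, b). \<psi> $ a * cnj (\<psi> $ b))"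

text \<open>Single-qubit SIC set, indexed by 0..3 (the paper's 1..4).\<close>
definition sic_set :: "(nat \<Rightarrow> complex vec) \<Rightarrow> bool" where
  "sic_set \<psi> \<longleftrightarrow> (\<forall>i<4. \<psi> i \<in> carrier_vec 2 \<and> vnorm (\<psi> i) = 1) \<and>
     (\<forall>i<4. \<forall>j<4. i \<noteq> j \<longrightarrow> (cmod (\<psi> i \<bullet>c \<psi> j))\<^sup>2 = 1 / 3)"

definition outcomes :: "nat \<Rightarrow> (nat \<Rightarrow> nat) set" where
  "outcomes N = PiE {0..<N} (\<lambda>_. {0..<4})"

text \<open>Pr[s | rho] = 2^-N <psi_s|rho|psi_s> (real for a density matrix).\<close>
definition sic_prob :: "(nat \<Rightarrow> complex vec) \<Rightarrow> nat \<Rightarrow> complex mat \<Rightarrow> (nat \<Rightarrow> nat) \<Rightarrow> real" where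
  "sic_prob \<psi> N \<rho> s =
     (let v = tensor_vecs N (\<lambda>n. \<psi> (s n)) in Re ((\<rho> *\<^sub>v v) \<bullet>c v) / 2 ^ N)"

definition sic_shadow :: "(nat \<Rightarrow> complex vec) \<Rightarrow> nat \<Rightarrow> (nat \<Rightarrow> nat) \<Rightarrow> complex mat" where
  "sic_shadow \<psi> N s = tensor_ops N (\<lambda>n. 3 \<cdot>\<^sub>m proj (\<psi> (s n)) - 1\<^sub>m 2)"

definition iid_prob :: "(nat \<Rightarrow> complex vec) \<Rightarrow> nat \<Rightarrow> complex mat \<Rightarrow> nat \<Rightarrow>
     ((nat \<Rightarrow> nat \<Rightarrow> nat) \<Rightarrow> bool) \<Rightarrow> real" where
  "iid_prob \<psi> N \<rho> M E =
     (\<Sum>ss \<in> {ss \<in> PiE {0..<M} (\<lambda>_. outcomes N). E ss}. \<Prod>m<M. sic_prob \<psi> N \<rho> (ss m))"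

end

theory Submission
  imports Defs
begin


definition merge :: "'a set \<Rightarrow> ('a \<Rightarrow> 'b) \<Rightarrow> ('a \<Rightarrow> 'b) \<Rightarrow> 'a \<Rightarrow> 'b" where
  "merge A g g' = (\<lambda>x. if x \<in> A then g x else g' x)"

lemma sum_PiE_split:
  assumes "A \<inter> B = {}"
  shows "(\<Sum>f\<in>PiE (A \<union> B) C. h f) = (\<Sum>g\<in>PiE A C. \<Sum>g'\<in>PiE B C. h (merge A g g'))"
proof -
  have "(\<Sum>f\<in>PiE (A \<union> B) C. h f) = (\<Sum>p\<in>PiE A C \<times> PiE B C. h (merge A (fst p) (snd p)))"
    using assms
    apply (intro sum.reindex_bij_witness[of _ "\<lambda>p. merge A (fst p) (snd p)" "\<lambda>f. (restrict f A, restrict f B)"])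
    apply (auto simp: merge_def PiE_def extensional_def restrict_def fun_eq_iff Pi_def)
    apply (rule arg_cong[where f=h])
    apply (auto simp: fun_eq_iff)
    done
  also have "\<dots> = (\<Sum>g\<in>PiE A C. \<Sum>g'\<in>PiE B C. h (merge A g g'))"
    by (simp add: sum.cartesian_product split_beta)
  finally show ?thesis .
qed

lemma merge_PiE: "A \<inter> B = {} \<Longrightarrow> g \<in> PiE A C \<Longrightarrow> g' \<in> PiE B C \<Longrightarrow> merge A g g' \<in> PiE (A \<union> B) C"
  by (auto simp: merge_def PiE_def extensional_def Pi_def)

lemma sum_prod_PiE:
  fixes f :: "'a \<Rightarrow> 'b \<Rightarrow> 'c :: comm_semiring_1"
  assumes "finite A" "\<And>x. x \<in> A \<Longrightarrow> finite (B x)"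
  shows "(\<Sum>g\<in>PiE A B. \<Prod>x\<in>A. f x (g x)) = (\<Prod>x\<in>A. \<Sum>y\<in>B x. f x y)"
  using prod_sum_PiE[of A B f] assms by simp

lemma qbit_lt2[simp]: "qbit n i < 2"
  by (simp add: qbit_def)

lemma binary_expansion: "i mod 2 ^ N = (\<Sum>n<N. qbit n i * 2 ^ n)"
proof (induction N)
  case 0 then show ?case by simp
next
  case (Suc N)
  have "i mod 2 ^ Suc N = 2 ^ N * (i div 2 ^ N mod 2) + i mod 2 ^ N"
    using mod_mult2_eq[of i "2^N" 2] by (simp add: mult.commute)
  then show ?case using Suc by (simp add: qbit_def mult.commute)
qed

lemma bits_eq_imp_eq:
  assumes "i < 2 ^ N" "j < 2 ^ N" "\<And>n. n < N \<Longrightarrow> qbit n i = qbit n j"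
  shows "i = j"
proof -
  have "i = i mod 2 ^ N" "j = j mod 2 ^ N" using assms by auto
  then show ?thesis using assms binary_expansion[of i N] binary_expansion[of j N] by auto
qed

definition bv :: "nat \<Rightarrow> nat \<Rightarrow> nat \<Rightarrow> nat" where
  "bv N i = restrict (\<lambda>n. qbit n i) {..<N}"

abbreviation bits :: "nat set \<Rightarrow> (nat \<Rightarrow> nat) set" where
  "bits A \<equiv> PiE A (\<lambda>_. {..<2::nat})"

lemma bv_in: "bv N i \<in> bits {..<N}"
  by (auto simp: bv_def)

lemma bv_apply[simp]: "n < N \<Longrightarrow> bv N i n = qbit n i"
  by (simp add: bv_def)

lemma bv_bij: "bij_betw (bv N) {..<2 ^ N} (bits {..<N})"
proof -
  have inj: "inj_on (bv N) {..<2 ^ N}"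
  proof (rule inj_onI)
    fix i j assume "i \<in> {..<2^N}" "j \<in> {..<2^N}" "bv N i = bv N j"
    then show "i = j"
    proof (intro bits_eq_imp_eq[of i N j])
      fix n assume "n < N" "bv N i = bv N j"
      then have "bv N i n = bv N j n" by simp
      then show "qbit n i = qbit n j" using \<open>n < N\<close> by simp
    qed auto
  qed
  have sub: "bv N ` {..<2 ^ N} \<subseteq> bits {..<N}" using bv_in by auto
  have "card (bv N ` {..<2 ^ N}) = 2 ^ N" using inj card_image by fastforce
  moreover have "card (bits {..<N}) = 2 ^ N" by (simp add: card_PiE)
  ultimately have "bv N ` {..<2 ^ N} = bits {..<N}"
    using sub by (intro card_subset_eq) (auto simp: finite_PiE)
  then show ?thesis using inj by (simp add: bij_betw_def)
qed

lemma sum_bits_conv: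
  assumes "\<And>i. i < 2 ^ N \<Longrightarrow> F i = G (bv N i)"
  shows "(\<Sum>i<2 ^ N. F i) = (\<Sum>b\<in>bits {..<N}. G b)"
proof -
  have "(\<Sum>i<2 ^ N. F i) = (\<Sum>i<2 ^ N. G (bv N i))" using assms by simp
  also have "\<dots> = (\<Sum>b\<in>bits {..<N}. G b)" by (rule sum.reindex_bij_betw[OF bv_bij])
  finally show ?thesis .
qed

lemma prod_delta_bits:
  assumes "i < 2 ^ N" "j < 2 ^ N"
  shows "(\<Prod>n<N. (if qbit n i = qbit n j then 1 else 0 :: 'a :: comm_semiring_1)) = (if i = j then 1 else 0)"
proof (cases "i = j")
  case True then show ?thesis by simp
next
  case False
  then obtain n where "n < N" "qbit n i \<noteq> qbit n j" using bits_eq_imp_eq assms by blast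
  then have "(\<Prod>n<N. (if qbit n i = qbit n j then 1 else 0 :: 'a)) = 0"
    by (intro prod_zero) (auto intro!: bexI[of _ n])
  then show ?thesis using False by simp
qed


definition KF :: "nat \<Rightarrow> complex mat \<Rightarrow> (nat \<Rightarrow> nat \<Rightarrow> nat \<Rightarrow> complex) \<Rightarrow> complex" where
  "KF N A g = (\<Sum>i<2^N. \<Sum>j<2^N. A $$ (i,j) * (\<Prod>n<N. g n (qbit n j) (qbit n i)))"

definition Pv :: "complex vec \<Rightarrow> nat \<Rightarrow> nat \<Rightarrow> complex" where "Pv v a b = v $ a * cnj (v $ b)"
definition sg :: "complex vec \<Rightarrow> nat \<Rightarrow> nat \<Rightarrow> complex" where
  "sg v a b = 3 * Pv v a b - (if a = b then 1 else 0)"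

lemma mult_vec_index: "A \<in> carrier_mat n m \<Longrightarrow> v \<in> carrier_vec m \<Longrightarrow> i < n \<Longrightarrow>
   (A *\<^sub>v v) $ i = (\<Sum>j<m. A $$ (i,j) * v $ j)"
  by (simp add: scalar_prod_def atLeast0LessThan)

lemma tensor_vecs_carrier[simp]: "tensor_vecs N u \<in> carrier_vec (2^N)"
  by (simp add: tensor_vecs_def)

lemma tensor_vecs_index: "i < 2^N \<Longrightarrow> tensor_vecs N u $ i = (\<Prod>n<N. u n $ qbit n i)"
  by (simp add: tensor_vecs_def)

lemma tensor_quad:
  assumes A: "A \<in> carrier_mat (2^N) (2^N)"
  shows "(A *\<^sub>v tensor_vecs N u) \<bullet>c tensor_vecs N u = KF N A (\<lambda>n. Pv (u n))"
proof -
  let ?v = "tensor_vecs N u"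
  have "(A *\<^sub>v ?v) \<bullet>c ?v = (\<Sum>i<2^N. (A *\<^sub>v ?v) $ i * cnj (?v $ i))"
    by (simp add: scalar_prod_def atLeast0LessThan tensor_vecs_def)
  also have "\<dots> = (\<Sum>i<2^N. \<Sum>j<2^N. A $$ (i,j) * (\<Prod>n<N. Pv (u n) (qbit n j) (qbit n i)))"
  proof (rule sum.cong[OF refl])
    fix i :: nat assume i: "i \<in> {..<2^N}"
    have "(A *\<^sub>v ?v) $ i * cnj (?v $ i) = (\<Sum>j<2^N. A $$ (i,j) * ?v $ j) * cnj (?v $ i)"
      using A i by (subst mult_vec_index[OF A tensor_vecs_carrier]) auto
    also have "\<dots> = (\<Sum>j<2^N. A $$ (i,j) * (?v $ j * cnj (?v $ i)))"
      by (simp add: sum_distrib_right mult.assoc)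
    also have "\<dots> = (\<Sum>j<2^N. A $$ (i,j) * (\<Prod>n<N. Pv (u n) (qbit n j) (qbit n i)))"
      using i by (intro sum.cong refl) (simp add: tensor_vecs_index cnj_prod prod.distrib[symmetric] Pv_def)
    finally show "(A *\<^sub>v ?v) $ i * cnj (?v $ i) = \<dots>" .
  qed
  finally show ?thesis by (simp add: KF_def)
qed

lemma ctrace_mult: "A \<in> carrier_mat n n \<Longrightarrow> B \<in> carrier_mat n n \<Longrightarrow>
    ctrace (A * B) = (\<Sum>i<n. \<Sum>j<n. A $$ (i,j) * B $$ (j,i))"
  by (simp add: ctrace_def scalar_prod_def atLeast0LessThan)

lemma sic_shadow_carrier[simp]: "sic_shadow \<psi> N s \<in> carrier_mat (2^N) (2^N)"
  by (simp add: sic_shadow_def tensor_ops_def)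

lemma sg_entry: "a < 2 \<Longrightarrow> b < 2 \<Longrightarrow> (3 \<cdot>\<^sub>m proj v - 1\<^sub>m 2) $$ (a,b) = sg v a b"
  by (simp add: proj_def sg_def Pv_def)

lemma shadow_entry: "i < 2^N \<Longrightarrow> j < 2^N \<Longrightarrow>
   sic_shadow \<psi> N s $$ (i,j) = (\<Prod>n<N. sg (\<psi> (s n)) (qbit n i) (qbit n j))"
  by (simp add: sic_shadow_def tensor_ops_def) (intro prod.cong refl, simp add: proj_def sg_def Pv_def)

lemma shadow_KF:
  assumes A: "A \<in> carrier_mat (2^N) (2^N)"
  shows "ctrace (A * sic_shadow \<psi> N s) = KF N A (\<lambda>n. sg (\<psi> (s n)))"
  using A by (simp add: ctrace_mult[OF A sic_shadow_carrier] shadow_entry KF_def)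

lemma KF_sum:
  assumes "\<And>n. finite (B n)"
  shows "(\<Sum>s\<in>PiE {..<N} B. KF N A (\<lambda>n. h n (s n))) = KF N A (\<lambda>n a b. \<Sum>x\<in>B n. h n x a b)"
proof -
  have "(\<Sum>s\<in>PiE {..<N} B. KF N A (\<lambda>n. h n (s n))) =
     (\<Sum>i<2^N. \<Sum>j<2^N. A $$ (i,j) * (\<Sum>s\<in>PiE {..<N} B. \<Prod>n<N. h n (s n) (qbit n j) (qbit n i)))"
    unfolding KF_def
    by (subst sum.swap, rule sum.cong[OF refl], subst sum.swap) (simp add: sum_distrib_left)
  also have "\<dots> = KF N A (\<lambda>n a b. \<Sum>x\<in>B n. h n x a b)"
    unfolding KF_def using assms
    by (subst sum_prod_PiE[where f="\<lambda>n x. h n x (qbit n _) (qbit n _)"]) auto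
  finally show ?thesis .
qed

lemma KF_sum2:
  assumes "\<And>n. finite (B n)"
  shows "(\<Sum>s\<in>PiE {..<N} B. KF N A (\<lambda>n. h n (s n)) * KF N C (\<lambda>n. h' n (s n))) =
    (\<Sum>i<2^N. \<Sum>j<2^N. \<Sum>k<2^N. \<Sum>l<2^N. A$$(i,j) * C$$(k,l) *
        (\<Prod>n<N. \<Sum>x\<in>B n. h n x (qbit n j) (qbit n i) * h' n x (qbit n l) (qbit n k)))"
proof -
  have "(\<Sum>s\<in>PiE {..<N} B. KF N A (\<lambda>n. h n (s n)) * KF N C (\<lambda>n. h' n (s n))) =
    (\<Sum>s\<in>PiE {..<N} B. \<Sum>i<2^N. \<Sum>j<2^N. \<Sum>k<2^N. \<Sum>l<2^N. A$$(i,j) * C$$(k,l) *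
        (\<Prod>n<N. h n (s n) (qbit n j) (qbit n i) * h' n (s n) (qbit n l) (qbit n k)))"
  proof (rule sum.cong[OF refl])
    fix s
    show "KF N A (\<lambda>n. h n (s n)) * KF N C (\<lambda>n. h' n (s n)) = (\<Sum>i<2^N. \<Sum>j<2^N. \<Sum>k<2^N. \<Sum>l<2^N. A$$(i,j) * C$$(k,l) *
        (\<Prod>n<N. h n (s n) (qbit n j) (qbit n i) * h' n (s n) (qbit n l) (qbit n k)))"
      unfolding KF_def
      apply (simp only: sum_distrib_right)
      apply (simp only: sum_distrib_left)
      apply (intro sum.cong refl)
      apply (simp add: prod.distrib mult_ac)
      done
  qed
  also have "\<dots> = (\<Sum>i<2^N. \<Sum>j<2^N. \<Sum>k<2^N. \<Sum>l<2^N. A$$(i,j) * C$$(k,l) *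
        (\<Sum>s\<in>PiE {..<N} B. \<Prod>n<N. h n (s n) (qbit n j) (qbit n i) * h' n (s n) (qbit n l) (qbit n k)))"
    apply (subst sum.swap, rule sum.cong[OF refl])
    apply (subst sum.swap, rule sum.cong[OF refl])
    apply (subst sum.swap, rule sum.cong[OF refl])
    apply (subst sum.swap, rule sum.cong[OF refl])
    apply (simp add: sum_distrib_left)
    done
  also have "\<dots> = (\<Sum>i<2^N. \<Sum>j<2^N. \<Sum>k<2^N. \<Sum>l<2^N. A$$(i,j) * C$$(k,l) *
        (\<Prod>n<N. \<Sum>x\<in>B n. h n x (qbit n j) (qbit n i) * h' n x (qbit n l) (qbit n k)))"
    using assms by (subst sum_prod_PiE) auto
  finally show ?thesis .
qed


lemma sum_pairs: "(\<Sum>p\<in>A \<times> B. h p) = (\<Sum>a\<in>A. \<Sum>b\<in>B. h (a,b))"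
  by (simp add: sum.cartesian_product)

lemma hs_expand:
  fixes f :: "'t \<Rightarrow> 'a \<Rightarrow> complex" and g :: "'a \<Rightarrow> complex"
  shows "complex_of_real (\<Sum>a\<in>A. (cmod ((\<Sum>t\<in>T. f t a) - g a))^2) =
     (\<Sum>t\<in>T. \<Sum>t'\<in>T. \<Sum>a\<in>A. f t a * cnj (f t' a)) - (\<Sum>t\<in>T. \<Sum>a\<in>A. f t a * cnj (g a))
      - cnj (\<Sum>t\<in>T. \<Sum>a\<in>A. f t a * cnj (g a)) + (\<Sum>a\<in>A. g a * cnj (g a))"
proof -
  have "complex_of_real (\<Sum>a\<in>A. (cmod ((\<Sum>t\<in>T. f t a) - g a))^2) =
     (\<Sum>a\<in>A. ((\<Sum>t\<in>T. f t a) - g a) * cnj ((\<Sum>t\<in>T. f t a) - g a))"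
    by (simp only: of_real_sum complex_norm_square)
  also have "\<dots> = (\<Sum>a\<in>A. (\<Sum>t\<in>T. f t a) * cnj (\<Sum>t\<in>T. f t a)) - (\<Sum>a\<in>A. (\<Sum>t\<in>T. f t a) * cnj (g a))
      - (\<Sum>a\<in>A. g a * cnj (\<Sum>t\<in>T. f t a)) + (\<Sum>a\<in>A. g a * cnj (g a))"
    by (simp add: algebra_simps sum_subtractf sum.distrib)
  also have "(\<Sum>a\<in>A. (\<Sum>t\<in>T. f t a) * cnj (\<Sum>t\<in>T. f t a)) = (\<Sum>t\<in>T. \<Sum>t'\<in>T. \<Sum>a\<in>A. f t a * cnj (f t' a))"
    by (simp add: cnj_sum sum_product, subst sum.swap, rule sum.cong[OF refl], subst sum.swap, simp)
  also have "(\<Sum>a\<in>A. (\<Sum>t\<in>T. f t a) * cnj (g a)) = (\<Sum>t\<in>T. \<Sum>a\<in>A. f t a * cnj (g a))"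
    by (simp add: sum_distrib_right, subst sum.swap, simp)
  also have "(\<Sum>a\<in>A. g a * cnj (\<Sum>t\<in>T. f t a)) = cnj (\<Sum>t\<in>T. \<Sum>a\<in>A. f t a * cnj (g a))"
    by (simp add: cnj_sum sum_distrib_left mult.commute, subst sum.swap, simp)
  finally show ?thesis .
qed

definition ip :: "complex vec \<Rightarrow> complex vec \<Rightarrow> complex" where
  "ip x y = (\<Sum>a<2. x $ a * cnj (y $ a))"

lemma ip_cscalar: "x \<in> carrier_vec 2 \<Longrightarrow> y \<in> carrier_vec 2 \<Longrightarrow> x \<bullet>c y = ip x y"
  by (simp add: scalar_prod_def ip_def atLeast0LessThan)

lemma vnorm_one_ip:
  assumes "x \<in> carrier_vec 2" "vnorm x = 1"
  shows "ip x x = 1" "(\<Sum>a<2. (cmod (x $ a))^2) = 1"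
proof -
  have s: "sqrt (\<Sum>a<2. (cmod (x $ a))^2) = 1" using assms by (simp add: vnorm_def)
  then show *: "(\<Sum>a<2. (cmod (x $ a))^2) = 1"
    by (metis real_sqrt_eq_1_iff)
  have "ip x x = complex_of_real (\<Sum>a<2. (cmod (x $ a))^2)"
    by (simp only: ip_def complex_norm_square of_real_sum)
  then show "ip x x = 1" using * by simp
qed

lemma Pv_pair_sum: "(\<Sum>a<2. \<Sum>b<2. Pv x a b * cnj (Pv y a b)) = ip x y * cnj (ip x y)"
  by (simp add: Pv_def ip_def sum_product cnj_sum mult_ac)

lemma sic_basic:
  assumes "sic_set \<psi>"
  shows "\<And>t. t < 4 \<Longrightarrow> \<psi> t \<in> carrier_vec 2"
    and "\<And>t. t < 4 \<Longrightarrow> ip (\<psi> t) (\<psi> t) = 1"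
    and "\<And>t. t < 4 \<Longrightarrow> (\<Sum>a<2. (cmod (\<psi> t $ a))^2) = 1"
    and "\<And>t t'. t < 4 \<Longrightarrow> t' < 4 \<Longrightarrow> ip (\<psi> t) (\<psi> t') * cnj (ip (\<psi> t) (\<psi> t')) = (if t = t' then 1 else 1/3)"
proof -
  show c: "\<And>t. t < 4 \<Longrightarrow> \<psi> t \<in> carrier_vec 2" using assms by (simp add: sic_set_def)
  show i: "\<And>t. t < 4 \<Longrightarrow> ip (\<psi> t) (\<psi> t) = 1" using assms vnorm_one_ip by (simp add: sic_set_def)
  show "\<And>t. t < 4 \<Longrightarrow> (\<Sum>a<2. (cmod (\<psi> t $ a))^2) = 1" using assms vnorm_one_ip by (simp add: sic_set_def)
  fix t t' :: nat assume tt: "t < 4" "t' < 4"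
  show "ip (\<psi> t) (\<psi> t') * cnj (ip (\<psi> t) (\<psi> t')) = (if t = t' then 1 else 1/3)"
  proof (cases "t = t'")
    case True then show ?thesis using i tt by simp
  next
    case False
    then have "(cmod (ip (\<psi> t) (\<psi> t')))^2 = 1/3"
      using assms tt c ip_cscalar by (simp add: sic_set_def)
    then have "complex_of_real ((cmod (ip (\<psi> t) (\<psi> t')))^2) = complex_of_real (1/3)" by (simp only:)
    then have "ip (\<psi> t) (\<psi> t') * cnj (ip (\<psi> t) (\<psi> t')) = 1/3"
      by (simp only: complex_norm_square) simp
    then show ?thesis using False by simp
  qed
qed

lemma sum4: "(\<Sum>t<4. f t) = f 0 + f 1 + f 2 + f (3::nat)"
  by (simp add: numeral_eq_Suc)

lemma sum2: "(\<Sum>t<2. f t) = f 0 + f (1::nat)"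
  by (simp add: numeral_eq_Suc)

lemma sic_frame:
  assumes "sic_set \<psi>" "a < 2" "b < 2"
  shows "(\<Sum>t<4. Pv (\<psi> t) a b) = (if a = b then 2 else 0)"
proof -
  note B = sic_basic[OF assms(1)]
  let ?A = "{..<2::nat} \<times> {..<2::nat}"
  let ?f = "\<lambda>t p. Pv (\<psi> t) (fst p) (snd p)"
  let ?g = "\<lambda>p::nat\<times>nat. if fst p = snd p then 2 else 0 :: complex"
  have S1: "(\<Sum>t<4. \<Sum>t'<4. \<Sum>p\<in>?A. ?f t p * cnj (?f t' p)) = 8"
  proof -
    have "(\<Sum>t<4. \<Sum>t'<4. \<Sum>p\<in>?A. ?f t p * cnj (?f t' p)) =
          (\<Sum>t<4. \<Sum>t'<4. ip (\<psi> t) (\<psi> t') * cnj (ip (\<psi> t) (\<psi> t')))"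
      by (intro sum.cong refl) (simp add: sum_pairs Pv_pair_sum)
    also have "\<dots> = (\<Sum>t<(4::nat). \<Sum>t'<(4::nat). (if t = t' then 1 else 1/3 :: complex))"
      using B(4) by (intro sum.cong refl) auto
    also have "\<dots> = 8" by (simp add: sum4)
    finally show ?thesis .
  qed
  have S2: "(\<Sum>t<4. \<Sum>p\<in>?A. ?f t p * cnj (?g p)) = 8"
  proof -
    have "(\<Sum>t<4. \<Sum>p\<in>?A. ?f t p * cnj (?g p)) = (\<Sum>t<4. 2 * ip (\<psi> t) (\<psi> t))"
      by (intro sum.cong refl) (simp add: sum_pairs sum2 ip_def Pv_def)
    also have "\<dots> = 8" using B(2) by (simp add: sum4)
    finally show ?thesis .
  qed
  have S3: "(\<Sum>p\<in>?A. ?g p * cnj (?g p)) = 8"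
    by (simp add: sum_pairs sum2)
  have "complex_of_real (\<Sum>p\<in>?A. (cmod ((\<Sum>t<4. ?f t p) - ?g p))^2) = 0"
    unfolding hs_expand S1 S2 S3 by simp
  then have "(\<Sum>p\<in>?A. (cmod ((\<Sum>t<4. ?f t p) - ?g p))^2) = 0" by (simp only: of_real_eq_0_iff)
  then have "\<forall>p\<in>?A. (cmod ((\<Sum>t<4. ?f t p) - ?g p))^2 = 0"
    by (subst (asm) sum_nonneg_eq_0_iff) auto
  then have "(cmod ((\<Sum>t<4. ?f t (a,b)) - ?g (a,b)))^2 = 0" using assms by auto
  then show ?thesis by simp
qed


definition g2 :: "nat \<Rightarrow> nat \<Rightarrow> nat \<Rightarrow> nat \<Rightarrow> complex" where
  "g2 a b c d = 2/3 * ((if a = b \<and> c = d then 1 else 0) + (if a = d \<and> c = b then 1 else 0))"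

lemma sic_design2:
  assumes "sic_set \<psi>" "a < 2" "b < 2" "c < 2" "d < 2"
  shows "(\<Sum>t<4. Pv (\<psi> t) a b * Pv (\<psi> t) c d) = g2 a b c d"
proof -
  note B = sic_basic[OF assms(1)]
  let ?A = "({..<2::nat} \<times> {..<2::nat}) \<times> ({..<2::nat} \<times> {..<2::nat})"
  let ?f = "\<lambda>t pq. Pv (\<psi> t) (fst (fst pq)) (snd (fst pq)) * Pv (\<psi> t) (fst (snd pq)) (snd (snd pq))"
  let ?g = "\<lambda>pq. g2 (fst (fst pq)) (snd (fst pq)) (fst (snd pq)) (snd (snd pq))"
  have S1: "(\<Sum>t<4. \<Sum>t'<4. \<Sum>p\<in>?A. ?f t p * cnj (?f t' p)) = 16/3"
  proof -
    have "(\<Sum>t<4. \<Sum>t'<4. \<Sum>p\<in>?A. ?f t p * cnj (?f t' p)) =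
          (\<Sum>t<4. \<Sum>t'<4. (ip (\<psi> t) (\<psi> t') * cnj (ip (\<psi> t) (\<psi> t')))^2)"
    proof (intro sum.cong refl)
      fix t t'
      have "(\<Sum>p\<in>?A. ?f t p * cnj (?f t' p)) =
         (\<Sum>p\<in>{..<2::nat} \<times> {..<2::nat}. Pv (\<psi> t) (fst p) (snd p) * cnj (Pv (\<psi> t') (fst p) (snd p))) *
         (\<Sum>q\<in>{..<2::nat} \<times> {..<2::nat}. Pv (\<psi> t) (fst q) (snd q) * cnj (Pv (\<psi> t') (fst q) (snd q)))"
        by (simp add: sum.cartesian_product sum_product mult_ac split_beta)
      also have "\<dots> = (ip (\<psi> t) (\<psi> t') * cnj (ip (\<psi> t) (\<psi> t')))^2"
        by (simp add: sum_pairs Pv_pair_sum power2_eq_square)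
      finally show "(\<Sum>p\<in>?A. ?f t p * cnj (?f t' p)) = (ip (\<psi> t) (\<psi> t') * cnj (ip (\<psi> t) (\<psi> t')))^2" .
    qed
    also have "\<dots> = (\<Sum>t<(4::nat). \<Sum>t'<(4::nat). (if t = t' then 1 else 1/9 :: complex))"
      using B(4) by (intro sum.cong refl) (auto simp: power2_eq_square)
    also have "\<dots> = 16/3" by (simp add: sum4)
    finally show ?thesis .
  qed
  have S2: "(\<Sum>t<4. \<Sum>p\<in>?A. ?f t p * cnj (?g p)) = 16/3"
  proof -
    have "(\<Sum>t<4. \<Sum>p\<in>?A. ?f t p * cnj (?g p)) = (\<Sum>t<4. 4/3 * (ip (\<psi> t) (\<psi> t))^2)"
    proof (intro sum.cong refl)
      fix t
      show "(\<Sum>p\<in>?A. ?f t p * cnj (?g p)) = 4/3 * (ip (\<psi> t) (\<psi> t))^2"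
        by (simp add: sum_pairs sum2 Pv_def ip_def g2_def power2_eq_square algebra_simps)
    qed
    also have "\<dots> = 16/3" using B(2) by (simp add: sum4)
    finally show ?thesis .
  qed
  have S3: "(\<Sum>p\<in>?A. ?g p * cnj (?g p)) = 16/3"
    by (simp add: sum_pairs sum2 g2_def)
  have "complex_of_real (\<Sum>p\<in>?A. (cmod ((\<Sum>t<4. ?f t p) - ?g p))^2) = 0"
    unfolding hs_expand S1 S2 S3 by simp
  then have "(\<Sum>p\<in>?A. (cmod ((\<Sum>t<4. ?f t p) - ?g p))^2) = 0" by (simp only: of_real_eq_0_iff)
  then have "\<forall>p\<in>?A. (cmod ((\<Sum>t<4. ?f t p) - ?g p))^2 = 0"
    by (subst (asm) sum_nonneg_eq_0_iff) auto
  then have "(cmod ((\<Sum>t<4. ?f t ((a,b),(c,d))) - ?g ((a,b),(c,d))))^2 = 0" using assms by auto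
  then show ?thesis by simp
qed


lemma outcomes_eq: "outcomes N = PiE {..<N} (\<lambda>_. {..<4})"
  by (simp add: outcomes_def atLeast0LessThan)

lemma sum_4_conv: "(\<Sum>x\<in>{0..<4::nat}. f x) = (\<Sum>x<4. f x)"
  by (simp add: atLeast0LessThan)

lemma kernel_unb:
  assumes "sic_set \<psi>" "j < 2" "i < 2" "l < 2" "k < 2"
  shows "(\<Sum>x<4. Pv (\<psi> x) j i * sg (\<psi> x) l k) = 2 * ((if j = k then 1 else 0) * (if l = i then 1 else 0))"
proof -
  have "(\<Sum>x<4. Pv (\<psi> x) j i * sg (\<psi> x) l k) =
        3 * (\<Sum>x<4. Pv (\<psi> x) j i * Pv (\<psi> x) l k) - (if l = k then 1 else 0) * (\<Sum>x<4. Pv (\<psi> x) j i)"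
    by (simp add: sg_def algebra_simps sum_subtractf sum_distrib_left sum_distrib_right)
  also have "\<dots> = 3 * g2 j i l k - (if l = k then 1 else 0) * (if j = i then 2 else 0)"
    using assms by (simp add: sic_design2 sic_frame)
  also have "\<dots> = 2 * ((if j = k then 1 else 0) * (if l = i then 1 else 0))"
    by (auto simp: g2_def)
  finally show ?thesis .
qed

lemma kernel_sq:
  assumes "sic_set \<psi>" "a' < 2" "a < 2" "c' < 2" "c < 2"
  shows "(\<Sum>x<4. sg (\<psi> x) a' a * cnj (sg (\<psi> x) c' c)) =
     6 * ((if a' = c' then 1 else 0) * (if a = c then 1 else 0)) - 2 * ((if a' = a then 1 else 0) * (if c = c' then 1 else 0))"
proof -
  have cs: "cnj (sg v c' c) = sg v c c'" for v
    by (simp add: sg_def Pv_def)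
  have "(\<Sum>x<4. sg (\<psi> x) a' a * cnj (sg (\<psi> x) c' c)) =
     9 * (\<Sum>x<4. Pv (\<psi> x) a' a * Pv (\<psi> x) c c') - 3 * (if c = c' then 1 else 0) * (\<Sum>x<4. Pv (\<psi> x) a' a)
       - 3 * (if a' = a then 1 else 0) * (\<Sum>x<4. Pv (\<psi> x) c c') + 4 * ((if a' = a then 1 else 0) * (if c = c' then 1 else 0))"
    unfolding cs by (simp add: sg_def algebra_simps sum_subtractf sum.distrib sum_distrib_left sum_distrib_right sum4)
  also have "\<dots> = 9 * g2 a' a c c' - 3 * (if c = c' then 1 else 0) * (if a' = a then 2 else 0)
       - 3 * (if a' = a then 1 else 0) * (if c = c' then 2 else 0) + 4 * ((if a' = a then 1 else 0) * (if c = c' then 1 else 0))"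
    using assms by (simp add: sic_design2 sic_frame)
  also have "\<dots> = 6 * ((if a' = c' then 1 else 0) * (if a = c then 1 else 0)) - 2 * ((if a' = a then 1 else 0) * (if c = c' then 1 else 0))"
    by (auto simp: g2_def)
  finally show ?thesis .
qed

lemma sg_trace:
  assumes "sic_set \<psi>" "x < 4"
  shows "sg (\<psi> x) 0 0 + sg (\<psi> x) 1 1 = 1"
proof -
  have h: "\<psi> x $ 0 * cnj (\<psi> x $ 0) + \<psi> x $ 1 * cnj (\<psi> x $ 1) = 1"
    using sic_basic(2)[OF assms] by (simp add: ip_def sum2)
  have "sg (\<psi> x) 0 0 + sg (\<psi> x) 1 1 = 3 * (\<psi> x $ 0 * cnj (\<psi> x $ 0) + \<psi> x $ 1 * cnj (\<psi> x $ 1)) - 2"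
    by (simp add: sg_def Pv_def algebra_simps)
  also have "\<dots> = 1" by (simp only: h) simp
  finally show ?thesis .
qed

lemma cnj_sg: "cnj (sg v a b) = sg v b a"
  by (simp add: sg_def Pv_def)

lemma cnj_Pv: "cnj (Pv v a b) = Pv v b a"
  by (simp add: Pv_def)

lemma prod_2AB: "(\<Prod>n<N. 2 * (A n * B n)) = (2::complex)^N * ((\<Prod>n<N. A n) * (\<Prod>n<N. B n))"
  by (induction N) (auto simp: mult_ac)

lemma prod_if2: "(\<Prod>n<N. (if P n then 2 else 0::complex)) = 2^N * (\<Prod>n<N. if P n then 1 else 0)"
  by (induction N) auto

lemma mult_if01: "(x::complex) * (c * (if P then 1 else 0)) = (if P then c * x else 0)"
  by simp

lemma delta_collapse:
  fixes F :: "nat \<Rightarrow> nat \<Rightarrow> complex"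
  assumes "j < 2^N" "i < 2^N"
  shows "(\<Sum>k<2^N. \<Sum>l<2^N. F k l * (\<Prod>n<N. 2 * ((if qbit n j = qbit n k then 1 else 0) * (if qbit n l = qbit n i then 1 else 0))))
     = 2^N * F j i"
proof -
  have "(\<Sum>k<2^N. \<Sum>l<2^N. F k l * (\<Prod>n<N. 2 * ((if qbit n j = qbit n k then 1 else 0) * (if qbit n l = qbit n i then 1 else 0))))
      = (\<Sum>k<2^N. \<Sum>l<2^N. F k l * (2^N * ((if j = k then 1 else 0) * (if l = i then 1 else 0))))"
  proof (intro sum.cong refl)
    fix k l assume "k \<in> {..<2^N::nat}" "l \<in> {..<2^N::nat}"
    then have kl: "k < 2^N" "l < 2^N" by auto
    have e1: "(\<Prod>n<N. if qbit n j = qbit n k then 1 else 0) = (if j = k then 1 else (0::complex))"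
      using prod_delta_bits[of j N k] assms kl by simp
    have e2: "(\<Prod>n<N. if qbit n l = qbit n i then 1 else 0) = (if l = i then 1 else (0::complex))"
      using prod_delta_bits[of l N i] assms kl by simp
    show "F k l * (\<Prod>n<N. 2 * ((if qbit n j = qbit n k then 1 else 0) * (if qbit n l = qbit n i then 1 else 0))) =
       F k l * (2^N * ((if j = k then 1 else 0) * (if l = i then 1 else 0)))"
      by (simp only: prod_2AB e1 e2)
  qed
  also have "\<dots> = (\<Sum>k<2^N. \<Sum>l<2^N. if k = j then (if l = i then 2^N * F k l else 0) else 0)"
    by (intro sum.cong refl) auto
  also have "\<dots> = (\<Sum>k<2^N. if k = j then (\<Sum>l<2^N. if l = i then 2^N * F k l else 0) else 0)"
    by (intro sum.cong refl) auto
  also have "\<dots> = 2^N * F j i" using assms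
    by (simp add: sum.delta)
  finally show ?thesis .
qed

lemma unbiased_KF:
  assumes "sic_set \<psi>" "\<rho> \<in> carrier_mat (2^N) (2^N)" "Ob \<in> carrier_mat (2^N) (2^N)"
  shows "(\<Sum>s\<in>outcomes N. KF N \<rho> (\<lambda>n. Pv (\<psi> (s n))) * KF N Ob (\<lambda>n. sg (\<psi> (s n)))) = 2^N * ctrace (Ob * \<rho>)"
proof -
  have "(\<Sum>s\<in>outcomes N. KF N \<rho> (\<lambda>n. Pv (\<psi> (s n))) * KF N Ob (\<lambda>n. sg (\<psi> (s n)))) =
    (\<Sum>i<2^N. \<Sum>j<2^N. \<Sum>k<2^N. \<Sum>l<2^N. \<rho>$$(i,j) * Ob$$(k,l) *
        (\<Prod>n<N. \<Sum>x<4. Pv (\<psi> x) (qbit n j) (qbit n i) * sg (\<psi> x) (qbit n l) (qbit n k)))"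
    unfolding outcomes_eq by (rule KF_sum2) simp
  also have "\<dots> = (\<Sum>i<2^N. \<Sum>j<2^N. \<rho>$$(i,j) * (\<Sum>k<2^N. \<Sum>l<2^N. Ob$$(k,l) *
        (\<Prod>n<N. 2 * ((if qbit n j = qbit n k then 1 else 0) * (if qbit n l = qbit n i then 1 else 0)))))"
    using assms(1) by (simp add: kernel_unb sum_distrib_left mult.assoc)
  also have "\<dots> = (\<Sum>i<2^N. \<Sum>j<2^N. \<rho>$$(i,j) * (2^N * Ob$$(j,i)))"
    by (intro sum.cong refl) (simp add: delta_collapse)
  also have "\<dots> = 2^N * ctrace (Ob * \<rho>)"
    using assms by (simp add: ctrace_mult sum_distrib_left mult_ac, subst sum.swap, simp)
  finally show ?thesis .
qed

lemma norm_KF: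
  assumes "sic_set \<psi>" "\<rho> \<in> carrier_mat (2^N) (2^N)"
  shows "(\<Sum>s\<in>outcomes N. KF N \<rho> (\<lambda>n. Pv (\<psi> (s n)))) = 2^N * ctrace \<rho>"
proof -
  have "(\<Sum>s\<in>outcomes N. KF N \<rho> (\<lambda>n. Pv (\<psi> (s n)))) = KF N \<rho> (\<lambda>n a b. \<Sum>x<4. Pv (\<psi> x) a b)"
    unfolding outcomes_eq by (rule KF_sum) simp
  also have "\<dots> = (\<Sum>i<2^N. \<Sum>j<2^N. \<rho>$$(i,j) * (\<Prod>n<N. (if qbit n j = qbit n i then 2 else 0)))"
    unfolding KF_def using assms(1) by (simp add: sic_frame)
  also have "\<dots> = (\<Sum>i<2^N. \<Sum>j<2^N. \<rho>$$(i,j) * (2^N * (if j = i then 1 else 0)))"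
    by (intro sum.cong refl) (simp only: prod_if2, simp add: prod_delta_bits)
  also have "\<dots> = 2^N * ctrace \<rho>"
    using assms by (simp add: ctrace_def if_distrib sum.delta sum_distrib_left mult.commute cong: if_cong)
  finally show ?thesis .
qed


definition Mred :: "nat set \<Rightarrow> ((nat\<Rightarrow>bool)\<Rightarrow>(nat\<Rightarrow>bool)\<Rightarrow>complex) \<Rightarrow> (nat\<Rightarrow>nat) \<Rightarrow> (nat\<Rightarrow>nat) \<Rightarrow> complex" where
  "Mred S OS a a' = OS (\<lambda>n. n \<in> S \<and> a n = 1) (\<lambda>n. n \<in> S \<and> a' n = 1)"

definition Omat :: "nat \<Rightarrow> nat set \<Rightarrow> ((nat\<Rightarrow>bool)\<Rightarrow>(nat\<Rightarrow>bool)\<Rightarrow>complex) \<Rightarrow> complex mat" where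
  "Omat N S OS = mat (2 ^ N) (2 ^ N) (\<lambda>(i, j).
              if (\<forall>n \<in> {0..<N} - S. qbit n i = qbit n j)
              then OS (restr_bits S i) (restr_bits S j) else 0)"

lemma acts_on_Omat: "acts_on N S A \<Longrightarrow> S \<subseteq> {..<N} \<and> (\<exists>OS. A = Omat N S OS)"
  unfolding acts_on_def Omat_def by (auto simp: atLeast0LessThan)

lemma Omat_carrier[simp]: "Omat N S OS \<in> carrier_mat (2^N) (2^N)"
  by (simp add: Omat_def)

lemma conv_Omat:
  fixes \<Phi> :: "complex \<Rightarrow> (nat \<Rightarrow> nat) \<Rightarrow> (nat \<Rightarrow> nat) \<Rightarrow> 'b :: comm_ring_1"
  assumes S: "S \<subseteq> {..<N}" and Z: "\<And>b b'. \<Phi> 0 b b' = 0"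
  shows "(\<Sum>i<2^N. \<Sum>j<2^N. \<Phi> (Omat N S OS $$ (i,j)) (bv N i) (bv N j)) =
     (\<Sum>a\<in>bits S. \<Sum>a'\<in>bits S. \<Sum>c\<in>bits ({..<N} - S). \<Phi> (Mred S OS a a') (merge S a c) (merge S a' c))"
proof -
  define R where "R = {..<N} - S"
  have SR: "S \<inter> R = {}" "S \<union> R = {..<N}" using S by (auto simp: R_def)
  define Oc where "Oc b b' = (if \<forall>n\<in>R. b n = b' n then OS (\<lambda>n. n \<in> S \<and> b n = 1) (\<lambda>n. n \<in> S \<and> b' n = 1) else 0)" for b b' :: "nat \<Rightarrow> nat"
  have Oeq: "Omat N S OS $$ (i,j) = Oc (bv N i) (bv N j)" if "i < 2^N" "j < 2^N" for i j
  proof -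
    have r: "restr_bits S k = (\<lambda>n. n \<in> S \<and> bv N k n = 1)" for k
      using S by (auto simp: restr_bits_def fun_eq_iff)
    have q: "(\<forall>n \<in> {0..<N} - S. qbit n i = qbit n j) = (\<forall>n\<in>R. bv N i n = bv N j n)"
      by (auto simp: R_def)
    show ?thesis using that unfolding Omat_def Oc_def by (simp add: r q)
  qed
  have "(\<Sum>i<2^N. \<Sum>j<2^N. \<Phi> (Omat N S OS $$ (i,j)) (bv N i) (bv N j)) =
        (\<Sum>b\<in>bits {..<N}. \<Sum>b'\<in>bits {..<N}. \<Phi> (Oc b b') b b')"
  proof (rule sum_bits_conv)
    fix i :: nat assume i: "i < 2^N"
    show "(\<Sum>j<2^N. \<Phi> (Omat N S OS $$ (i,j)) (bv N i) (bv N j)) = (\<Sum>b'\<in>bits {..<N}. \<Phi> (Oc (bv N i) b') (bv N i) b')"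
      by (rule sum_bits_conv) (simp add: Oeq i)
  qed
  also have "\<dots> = (\<Sum>a\<in>bits S. \<Sum>c\<in>bits R. \<Sum>a'\<in>bits S. \<Sum>c'\<in>bits R.
       \<Phi> (Oc (merge S a c) (merge S a' c')) (merge S a c) (merge S a' c'))"
    unfolding SR(2)[symmetric] sum_PiE_split[OF SR(1)] by simp
  also have "\<dots> = (\<Sum>a\<in>bits S. \<Sum>c\<in>bits R. \<Sum>a'\<in>bits S. \<Sum>c'\<in>bits R.
       if c' = c then \<Phi> (Mred S OS a a') (merge S a c) (merge S a' c) else 0)"
  proof (intro sum.cong refl)
    fix a c a' c' assume a: "a \<in> bits S" and c: "c \<in> bits R" and a': "a' \<in> bits S" and c': "c' \<in> bits R"
    have e: "(\<forall>n\<in>R. merge S a c n = merge S a' c' n) = (c' = c)"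
    proof
      assume "\<forall>n\<in>R. merge S a c n = merge S a' c' n"
      then have "\<forall>n\<in>R. c n = c' n" using SR(1) by (auto simp: merge_def) (metis disjoint_iff)
      then show "c' = c" using c c' by (metis PiE_ext)
    qed (use SR(1) in \<open>auto simp: merge_def\<close>)
    have m: "(\<lambda>n. n \<in> S \<and> merge S x y n = 1) = (\<lambda>n. n \<in> S \<and> x n = 1)" for x y
      by (auto simp: merge_def fun_eq_iff)
    show "\<Phi> (Oc (merge S a c) (merge S a' c')) (merge S a c) (merge S a' c') =
       (if c' = c then \<Phi> (Mred S OS a a') (merge S a c) (merge S a' c) else 0)"
      unfolding Oc_def e m Mred_def using Z by auto
  qed
  also have "\<dots> = (\<Sum>a\<in>bits S. \<Sum>c\<in>bits R. \<Sum>a'\<in>bits S. \<Phi> (Mred S OS a a') (merge S a c) (merge S a' c))"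
    using SR by (intro sum.cong refl) (simp add: sum.delta finite_PiE R_def)
  also have "\<dots> = (\<Sum>a\<in>bits S. \<Sum>a'\<in>bits S. \<Sum>c\<in>bits R. \<Phi> (Mred S OS a a') (merge S a c) (merge S a' c))"
    by (rule sum.cong[OF refl]) (rule sum.swap)
  finally show ?thesis by (simp add: R_def)
qed


definition Gs :: "nat set \<Rightarrow> ((nat\<Rightarrow>bool)\<Rightarrow>(nat\<Rightarrow>bool)\<Rightarrow>complex) \<Rightarrow> (nat \<Rightarrow> nat \<Rightarrow> nat \<Rightarrow> complex) \<Rightarrow> complex" where
  "Gs S OS g = (\<Sum>a\<in>bits S. \<Sum>a'\<in>bits S. Mred S OS a a' * (\<Prod>n\<in>S. g n (a' n) (a n)))"

lemma KF_Omat: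
  assumes S: "S \<subseteq> {..<N}"
  shows "KF N (Omat N S OS) g = Gs S OS g * (\<Prod>n\<in>{..<N}-S. \<Sum>x<2. g n x x)"
proof -
  define R where "R = {..<N} - S"
  have SR: "S \<inter> R = {}" "S \<union> R = {..<N}" using S by (auto simp: R_def)
  have fin: "finite S" "finite R" using S finite_subset by (auto simp: R_def)
  have "KF N (Omat N S OS) g = (\<Sum>i<2^N. \<Sum>j<2^N. (\<lambda>x b b'. x * (\<Prod>n<N. g n (b' n) (b n))) (Omat N S OS $$ (i,j)) (bv N i) (bv N j))"
    unfolding KF_def by (intro sum.cong refl) simp
  also have "\<dots> = (\<Sum>a\<in>bits S. \<Sum>a'\<in>bits S. \<Sum>c\<in>bits R. Mred S OS a a' * (\<Prod>n<N. g n (merge S a' c n) (merge S a c n)))"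
    unfolding R_def by (subst conv_Omat[OF S]) auto
  also have "\<dots> = (\<Sum>a\<in>bits S. \<Sum>a'\<in>bits S. Mred S OS a a' * (\<Prod>n\<in>S. g n (a' n) (a n)) * (\<Sum>c\<in>bits R. \<Prod>n\<in>R. g n (c n) (c n)))"
  proof (intro sum.cong refl)
    fix a a'
    have "(\<Prod>n<N. g n (merge S a' c n) (merge S a c n)) = (\<Prod>n\<in>S. g n (a' n) (a n)) * (\<Prod>n\<in>R. g n (c n) (c n))" for c
    proof -
      have "(\<Prod>n<N. g n (merge S a' c n) (merge S a c n)) = (\<Prod>n\<in>S \<union> R. g n (merge S a' c n) (merge S a c n))"
        using SR by simp
      also have "\<dots> = (\<Prod>n\<in>S. g n (merge S a' c n) (merge S a c n)) * (\<Prod>n\<in>R. g n (merge S a' c n) (merge S a c n))"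
        by (rule prod.union_disjoint[OF fin SR(1)])
      also have "\<dots> = (\<Prod>n\<in>S. g n (a' n) (a n)) * (\<Prod>n\<in>R. g n (c n) (c n))"
        using SR by (intro arg_cong2[where f="(*)"] prod.cong refl) (auto simp: merge_def)
      finally show ?thesis .
    qed
    then show "(\<Sum>c\<in>bits R. Mred S OS a a' * (\<Prod>n<N. g n (merge S a' c n) (merge S a c n))) =
        Mred S OS a a' * (\<Prod>n\<in>S. g n (a' n) (a n)) * (\<Sum>c\<in>bits R. \<Prod>n\<in>R. g n (c n) (c n))"
      by (simp add: sum_distrib_left mult.assoc)
  qed
  also have "(\<Sum>c\<in>bits R. \<Prod>n\<in>R. g n (c n) (c n)) = (\<Prod>n\<in>R. \<Sum>x<2. g n x x)"
    using fin by (subst sum_prod_PiE) auto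
  finally show ?thesis
    by (simp add: Gs_def R_def sum_distrib_right)
qed

lemma HS_Omat:
  assumes S: "S \<subseteq> {..<N}"
  shows "(\<Sum>i<2^N. \<Sum>j<2^N. (cmod (Omat N S OS $$ (i,j)))^2) =
         2 ^ (N - card S) * (\<Sum>a\<in>bits S. \<Sum>a'\<in>bits S. (cmod (Mred S OS a a'))^2)"
proof -
  have fin: "finite S" using S finite_subset by auto
  have cR: "card ({..<N} - S) = N - card S" using S fin by (simp add: card_Diff_subset)
  have "(\<Sum>i<2^N. \<Sum>j<2^N. (cmod (Omat N S OS $$ (i,j)))^2) =
     (\<Sum>a\<in>bits S. \<Sum>a'\<in>bits S. \<Sum>c\<in>bits ({..<N} - S). (cmod (Mred S OS a a'))^2)"
    using conv_Omat[OF S, of "\<lambda>x b b'. (cmod x)^2" OS] by simp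
  also have "\<dots> = (\<Sum>a\<in>bits S. \<Sum>a'\<in>bits S. 2 ^ (N - card S) * (cmod (Mred S OS a a'))^2)"
    using cR by (simp add: card_PiE)
  finally show ?thesis by (simp add: sum_distrib_left)
qed


lemma sum_PiE_insert:
  assumes "n \<notin> W"
  shows "(\<Sum>f\<in>PiE (insert n W) B. h f) = (\<Sum>x\<in>B n. \<Sum>g\<in>PiE W B. h (g(n := x)))"
proof -
  have "(\<Sum>f\<in>PiE (insert n W) B. h f) = (\<Sum>p\<in>B n \<times> PiE W B. h ((snd p)(n := fst p)))"
    using assms
    apply (intro sum.reindex_bij_witness[of _ "\<lambda>p. (snd p)(n := fst p)" "\<lambda>f. (f n, f(n := undefined))"])
    apply (auto simp: PiE_def extensional_def fun_eq_iff Pi_def)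
    done
  also have "\<dots> = (\<Sum>x\<in>B n. \<Sum>g\<in>PiE W B. h (g(n := x)))"
    by (simp add: sum_pairs)
  finally show ?thesis .
qed

definition kap :: "nat \<Rightarrow> nat \<Rightarrow> nat \<Rightarrow> nat \<Rightarrow> complex" where
  "kap x' x y' y = 3 * ((if x' = y' then 1 else 0) * (if x = y then 1 else 0)) - (if x' = x then 1 else 0) * (if y = y' then 1 else 0)"

type_synonym bm = "(nat \<Rightarrow> nat) \<Rightarrow> (nat \<Rightarrow> nat) \<Rightarrow> complex"

definition QF :: "nat set \<Rightarrow> bm \<Rightarrow> bm \<Rightarrow> complex" where
  "QF W A B = (\<Sum>a\<in>bits W. \<Sum>a'\<in>bits W. \<Sum>c\<in>bits W. \<Sum>c'\<in>bits W.
      A a a' * cnj (B c c') * (\<Prod>n\<in>W. kap (a' n) (a n) (c' n) (c n)))"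

definition HSn :: "nat set \<Rightarrow> bm \<Rightarrow> real" where
  "HSn W A = (\<Sum>a\<in>bits W. \<Sum>a'\<in>bits W. (cmod (A a a'))^2)"

definition blk :: "nat \<Rightarrow> bm \<Rightarrow> nat \<Rightarrow> nat \<Rightarrow> bm" where
  "blk n A x x' = (\<lambda>a a'. A (a(n := x)) (a'(n := x')))"

lemma QF_add1: "QF W (\<lambda>a a'. A a a' + B a a') C = QF W A C + QF W B C"
  by (simp add: QF_def algebra_simps sum.distrib)
lemma QF_diff1: "QF W (\<lambda>a a'. A a a' - B a a') C = QF W A C - QF W B C"
  by (simp add: QF_def algebra_simps sum_subtractf)
lemma QF_add2: "QF W C (\<lambda>a a'. A a a' + B a a') = QF W C A + QF W C B"
  by (simp add: QF_def algebra_simps sum.distrib)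
lemma QF_diff2: "QF W C (\<lambda>a a'. A a a' - B a a') = QF W C A - QF W C B"
  by (simp add: QF_def algebra_simps sum_subtractf)

lemma QF_insert:
  assumes "n \<notin> W" "finite W"
  shows "QF (insert n W) A B =
     3 * (\<Sum>x<2. \<Sum>x'<2. QF W (blk n A x x') (blk n B x x')) - (\<Sum>x<2. \<Sum>y<2. QF W (blk n A x x) (blk n B y y))"
proof -
  have pr: "(\<Prod>m\<in>insert n W. kap ((a'(n:=x')) m) ((a(n:=x)) m) ((c'(n:=y')) m) ((c(n:=y)) m)) =
     kap x' x y' y * (\<Prod>m\<in>W. kap (a' m) (a m) (c' m) (c m))" for a a' c c' x x' y y'
  proof -
    have "(\<Prod>m\<in>insert n W. kap ((a'(n:=x')) m) ((a(n:=x)) m) ((c'(n:=y')) m) ((c(n:=y)) m)) =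
      kap x' x y' y * (\<Prod>m\<in>W. kap ((a'(n:=x')) m) ((a(n:=x)) m) ((c'(n:=y')) m) ((c(n:=y)) m))"
      using assms by simp
    also have "(\<Prod>m\<in>W. kap ((a'(n:=x')) m) ((a(n:=x)) m) ((c'(n:=y')) m) ((c(n:=y)) m)) = (\<Prod>m\<in>W. kap (a' m) (a m) (c' m) (c m))"
      using assms by (intro prod.cong refl) auto
    finally show ?thesis .
  qed
  have "QF (insert n W) A B = (\<Sum>x<2. \<Sum>a\<in>bits W. \<Sum>x'<2. \<Sum>a'\<in>bits W. \<Sum>y<2. \<Sum>c\<in>bits W. \<Sum>y'<2. \<Sum>c'\<in>bits W.
      A (a(n:=x)) (a'(n:=x')) * cnj (B (c(n:=y)) (c'(n:=y'))) * (kap x' x y' y * (\<Prod>m\<in>W. kap (a' m) (a m) (c' m) (c m))))"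
    unfolding QF_def by (simp only: sum_PiE_insert[OF assms(1)] pr)
  also have "\<dots> = (\<Sum>a\<in>bits W. \<Sum>a'\<in>bits W. \<Sum>c\<in>bits W. \<Sum>c'\<in>bits W.
      (\<Sum>x<2. \<Sum>x'<2. \<Sum>y<2. \<Sum>y'<2. kap x' x y' y * (A (a(n:=x)) (a'(n:=x')) * cnj (B (c(n:=y)) (c'(n:=y'))) * (\<Prod>m\<in>W. kap (a' m) (a m) (c' m) (c m)))))"
    by (simp add: sum2 sum.distrib mult_ac)
  also have "\<dots> = (\<Sum>x<2. \<Sum>x'<2. \<Sum>y<2. \<Sum>y'<2. kap x' x y' y * QF W (blk n A x x') (blk n B y y'))"
    by (simp add: sum2 sum.distrib QF_def blk_def sum_distrib_left)
  also have "\<dots> = 3 * (\<Sum>x<2. \<Sum>x'<2. QF W (blk n A x x') (blk n B x x')) - (\<Sum>x<2. \<Sum>y<2. QF W (blk n A x x) (blk n B y y))"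
    by (simp add: sum2 kap_def algebra_simps)
  finally show ?thesis .
qed


lemma HSn_insert:
  assumes "n \<notin> W"
  shows "HSn (insert n W) A = (\<Sum>x<2. \<Sum>x'<2. HSn W (blk n A x x'))"
  unfolding HSn_def blk_def
  by (simp only: sum_PiE_insert[OF assms]) (simp add: sum2 sum.distrib)

lemma QF_empty: "QF {} A A = A (\<lambda>_. undefined) (\<lambda>_. undefined) * cnj (A (\<lambda>_. undefined) (\<lambda>_. undefined))"
  by (simp add: QF_def)

lemma HSn_empty: "HSn {} A = (cmod (A (\<lambda>_. undefined) (\<lambda>_. undefined)))^2"
  by (simp add: HSn_def)

lemma QF_bound:
  assumes "finite W"
  shows "\<forall>A. Im (QF W A A) = 0 \<and> 0 \<le> Re (QF W A A) \<and> Re (QF W A A) \<le> 3 ^ card W * HSn W A"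
  using assms
proof (induction W rule: finite_induct)
  case empty
  show ?case
  proof
    fix A :: bm
    let ?z = "A (\<lambda>_. undefined) (\<lambda>_. undefined)"
    have "QF {} A A = complex_of_real ((cmod ?z)^2)" by (simp only: QF_empty complex_norm_square)
    then show "Im (QF {} A A) = 0 \<and> 0 \<le> Re (QF {} A A) \<and> Re (QF {} A A) \<le> 3 ^ card {} * HSn {} A"
      by (simp add: HSn_empty)
  qed
next
  case (insert n W)
  show ?case
  proof
    fix A :: bm
    define Q where "Q x x' = QF W (blk n A x x') (blk n A x x')" for x x'
    define D where "D = (\<lambda>a a'. blk n A 0 0 a a' + blk n A 1 1 a a')"
    define E where "E = (\<lambda>a a'. blk n A 0 0 a a' - blk n A 1 1 a a')"
    define X where "X = QF W (blk n A 0 0) (blk n A 1 1)"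
    define Y where "Y = QF W (blk n A 1 1) (blk n A 0 0)"
    have ins: "QF (insert n W) A A = 3 * (Q 0 0 + Q 0 1 + Q 1 0 + Q 1 1) - QF W D D"
      unfolding QF_insert[OF insert(2,1)] D_def QF_add1 QF_add2 by (simp add: sum2 Q_def)
    have DD: "QF W D D = Q 0 0 + Q 1 1 + X + Y"
      unfolding D_def QF_add1 QF_add2 by (simp add: Q_def X_def Y_def)
    have EE: "QF W E E = Q 0 0 + Q 1 1 - X - Y"
      unfolding E_def QF_diff1 QF_diff2 by (simp add: Q_def X_def Y_def)
    have IH: "Im (QF W B B) = 0 \<and> 0 \<le> Re (QF W B B) \<and> Re (QF W B B) \<le> 3 ^ card W * HSn W B" for B
      using insert(3) by blast
    have q: "Im (Q x x') = 0" "0 \<le> Re (Q x x')" "Re (Q x x') \<le> 3 ^ card W * HSn W (blk n A x x')" for x x'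
      using IH[of "blk n A x x'"] by (auto simp: Q_def)
    have d: "Im (QF W D D) = 0" "0 \<le> Re (QF W D D)" using IH[of D] by auto
    have e: "Im (QF W E E) = 0" "0 \<le> Re (QF W E E)" using IH[of E] by auto
    have hs: "HSn (insert n W) A = HSn W (blk n A 0 0) + HSn W (blk n A 0 1) + HSn W (blk n A 1 0) + HSn W (blk n A 1 1)"
      by (simp add: HSn_insert[OF insert(2)] sum2)
    have c: "card (insert n W) = Suc (card W)" using insert by simp
    have r1: "Re (QF W D D) = Re (Q 0 0) + Re (Q 1 1) + Re (X + Y)" using DD by simp
    have r2: "Re (QF W E E) = Re (Q 0 0) + Re (Q 1 1) - Re (X + Y)" using EE by simp
    have i1: "Im (QF W D D) = Im (Q 0 0) + Im (Q 1 1) + Im (X + Y)" using DD by simp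
    have i2: "Im (QF W E E) = Im (Q 0 0) + Im (Q 1 1) - Im (X + Y)" using EE by simp
    have "Im (QF (insert n W) A A) = 0"
      unfolding ins using q(1)[of 0 0] q(1)[of 0 1] q(1)[of 1 0] q(1)[of 1 1] d(1) by simp
    moreover have "0 \<le> Re (QF (insert n W) A A)"
      unfolding ins using q(2)[of 0 0] q(2)[of 0 1] q(2)[of 1 0] q(2)[of 1 1] r1 r2 e(2) by simp
    moreover have "Re (QF (insert n W) A A) \<le> 3 ^ card (insert n W) * HSn (insert n W) A"
      unfolding ins c hs using q(3)[of 0 0] q(3)[of 0 1] q(3)[of 1 0] q(3)[of 1 1] d(2)
      by (simp add: algebra_simps)
    ultimately show "Im (QF (insert n W) A A) = 0 \<and> 0 \<le> Re (QF (insert n W) A A) \<and>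
        Re (QF (insert n W) A A) \<le> 3 ^ card (insert n W) * HSn (insert n W) A" by blast
  qed
qed


lemma sumsq_Gs:
  assumes "sic_set \<psi>" "finite S"
  shows "(\<Sum>t\<in>PiE S (\<lambda>_. {..<4}). Gs S OS (\<lambda>n. sg (\<psi> (t n))) * cnj (Gs S OS (\<lambda>n. sg (\<psi> (t n)))))
     = 2 ^ card S * QF S (Mred S OS) (Mred S OS)"
proof -
  let ?M = "Mred S OS"
  have "(\<Sum>t\<in>PiE S (\<lambda>_. {..<4}). Gs S OS (\<lambda>n. sg (\<psi> (t n))) * cnj (Gs S OS (\<lambda>n. sg (\<psi> (t n)))))
    = (\<Sum>t\<in>PiE S (\<lambda>_. {..<4}). \<Sum>a\<in>bits S. \<Sum>a'\<in>bits S. \<Sum>c\<in>bits S. \<Sum>c'\<in>bits S.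
        ?M a a' * cnj (?M c c') * (\<Prod>n\<in>S. sg (\<psi> (t n)) (a' n) (a n) * cnj (sg (\<psi> (t n)) (c' n) (c n))))"
    unfolding Gs_def
    apply (rule sum.cong[OF refl])
    apply (simp only: cnj_sum complex_cnj_mult cnj_prod)
    apply (simp only: sum_distrib_right)
    apply (simp only: sum_distrib_left)
    apply (intro sum.cong refl)
    apply (simp add: prod.distrib mult_ac)
    done
  also have "\<dots> = (\<Sum>a\<in>bits S. \<Sum>a'\<in>bits S. \<Sum>c\<in>bits S. \<Sum>c'\<in>bits S.
        ?M a a' * cnj (?M c c') * (\<Sum>t\<in>PiE S (\<lambda>_. {..<4}). \<Prod>n\<in>S. sg (\<psi> (t n)) (a' n) (a n) * cnj (sg (\<psi> (t n)) (c' n) (c n))))"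
    apply (subst sum.swap, rule sum.cong[OF refl])
    apply (subst sum.swap, rule sum.cong[OF refl])
    apply (subst sum.swap, rule sum.cong[OF refl])
    apply (subst sum.swap, rule sum.cong[OF refl])
    apply (simp add: sum_distrib_left)
    done
  also have "\<dots> = (\<Sum>a\<in>bits S. \<Sum>a'\<in>bits S. \<Sum>c\<in>bits S. \<Sum>c'\<in>bits S.
        ?M a a' * cnj (?M c c') * (2 ^ card S * (\<Prod>n\<in>S. kap (a' n) (a n) (c' n) (c n))))"
  proof (intro sum.cong refl)
    fix a a' c c' assume h: "a \<in> bits S" "a' \<in> bits S" "c \<in> bits S" "c' \<in> bits S"
    have "(\<Sum>t\<in>PiE S (\<lambda>_. {..<4}). \<Prod>n\<in>S. sg (\<psi> (t n)) (a' n) (a n) * cnj (sg (\<psi> (t n)) (c' n) (c n)))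
        = (\<Prod>n\<in>S. \<Sum>x<4. sg (\<psi> x) (a' n) (a n) * cnj (sg (\<psi> x) (c' n) (c n)))"
      using assms(2) by (subst sum_prod_PiE) auto
    also have "\<dots> = (\<Prod>n\<in>S. 2 * kap (a' n) (a n) (c' n) (c n))"
    proof (intro prod.cong refl)
      fix n assume n: "n \<in> S"
      have lt: "a n < 2" "a' n < 2" "c n < 2" "c' n < 2" using h n by (auto dest: PiE_mem)
      show "(\<Sum>x<4. sg (\<psi> x) (a' n) (a n) * cnj (sg (\<psi> x) (c' n) (c n))) = 2 * kap (a' n) (a n) (c' n) (c n)"
        unfolding kernel_sq[OF assms(1) lt(2,1,4,3)] kap_def by (simp add: algebra_simps)
    qed
    also have "\<dots> = 2 ^ card S * (\<Prod>n\<in>S. kap (a' n) (a n) (c' n) (c n))"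
      by (simp add: prod.distrib)
    finally show "?M a a' * cnj (?M c c') * (\<Sum>t\<in>PiE S (\<lambda>_. {..<4}). \<Prod>n\<in>S. sg (\<psi> (t n)) (a' n) (a n) * cnj (sg (\<psi> (t n)) (c' n) (c n)))
       = ?M a a' * cnj (?M c c') * (2 ^ card S * (\<Prod>n\<in>S. kap (a' n) (a n) (c' n) (c n)))" by simp
  qed
  also have "\<dots> = 2 ^ card S * QF S ?M ?M"
    by (simp add: QF_def sum_distrib_left mult_ac)
  finally show ?thesis .
qed

lemma sumsq_Gs_bound:
  assumes "sic_set \<psi>" "finite S"
  shows "(\<Sum>t\<in>PiE S (\<lambda>_. {..<4}). (cmod (Gs S OS (\<lambda>n. sg (\<psi> (t n)))))^2)
     \<le> 6 ^ card S * HSn S (Mred S OS)"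
proof -
  let ?G = "\<lambda>t. Gs S OS (\<lambda>n. sg (\<psi> (t n)))"
  have "complex_of_real (\<Sum>t\<in>PiE S (\<lambda>_. {..<4}). (cmod (?G t))^2) = 2 ^ card S * QF S (Mred S OS) (Mred S OS)"
    using sumsq_Gs[OF assms, of OS] by (simp only: of_real_sum complex_norm_square)
  then have "(\<Sum>t\<in>PiE S (\<lambda>_. {..<4}). (cmod (?G t))^2) = Re (2 ^ card S * QF S (Mred S OS) (Mred S OS))"
    by (metis Re_complex_of_real)
  also have "\<dots> = 2 ^ card S * Re (QF S (Mred S OS) (Mred S OS))"
    by simp
  also have "\<dots> \<le> 2 ^ card S * (3 ^ card S * HSn S (Mred S OS))"
    using QF_bound[OF assms(2)] by (intro mult_left_mono) auto
  also have "\<dots> = 6 ^ card S * HSn S (Mred S OS)"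
    by (simp add: power_mult_distrib[symmetric])
  finally show ?thesis .
qed


lemma dim_tensor[simp]: "dim_vec (tensor_vecs N w) = 2^N"
  by (simp add: tensor_vecs_def)

lemma vnorm_sq: "(vnorm v)^2 = (\<Sum>i<dim_vec v. (cmod (v$i))^2)"
  by (simp add: vnorm_def sum_nonneg)

lemma vnorm_nonneg: "0 \<le> vnorm v"
  by (simp add: vnorm_def sum_nonneg)

lemma entry_le_vnorm:
  assumes "i < dim_vec v" shows "cmod (v$i) \<le> vnorm v"
proof -
  have "(cmod (v$i))^2 \<le> (\<Sum>k<dim_vec v. (cmod (v$k))^2)"
    using assms by (intro member_le_sum) auto
  then have "sqrt ((cmod (v$i))^2) \<le> vnorm v" unfolding vnorm_def by (rule real_sqrt_le_mono)
  then show ?thesis by simp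
qed

lemma opnorm_bdd:
  assumes A: "A \<in> carrier_mat n m"
  shows "bdd_above {vnorm (A *\<^sub>v v) | v. v \<in> carrier_vec (dim_col A) \<and> vnorm v = 1}"
proof -
  define r where "r i = (\<Sum>j<m. cmod (A $$ (i,j)))" for i
  have "vnorm (A *\<^sub>v v) \<le> sqrt (\<Sum>i<n. (r i)^2)" if v: "v \<in> carrier_vec m" "vnorm v = 1" for v
  proof -
    have e: "cmod ((A *\<^sub>v v) $ i) \<le> r i" if i: "i < n" for i
    proof -
      have "cmod ((A *\<^sub>v v) $ i) = cmod (\<Sum>j<m. A $$ (i,j) * v $ j)" by (subst mult_vec_index[OF A v(1) i]) simp
      also have "\<dots> \<le> (\<Sum>j<m. cmod (A $$ (i,j)) * cmod (v $ j))"
        by (rule order_trans[OF norm_sum]) (simp add: norm_mult)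
      also have "\<dots> \<le> (\<Sum>j<m. cmod (A $$ (i,j)) * 1)"
        using v entry_le_vnorm[of _ v] by (intro sum_mono mult_left_mono) auto
      finally show ?thesis by (simp add: r_def)
    qed
    have "vnorm (A *\<^sub>v v) = sqrt (\<Sum>i<n. (cmod ((A *\<^sub>v v) $ i))^2)" using A by (simp add: vnorm_def)
    also have "\<dots> \<le> sqrt (\<Sum>i<n. (r i)^2)"
      using e by (intro real_sqrt_le_mono sum_mono power_mono) auto
    finally show ?thesis .
  qed
  then show ?thesis using A unfolding bdd_above_def by auto
qed

lemma opnorm_ge:
  assumes A: "A \<in> carrier_mat n m" and v: "v \<in> carrier_vec m" "vnorm v = 1"
  shows "vnorm (A *\<^sub>v v) \<le> opnorm A"
  unfolding opnorm_def
  by (rule cSup_upper) (use A v opnorm_bdd[OF A] in auto)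

lemma col_bound:
  assumes A: "A \<in> carrier_mat n n" "opnorm A = 1" and j: "j < n"
  shows "(\<Sum>i<n. (cmod (A $$ (i,j)))^2) \<le> 1"
proof -
  let ?e = "unit_vec n j"
  have vn: "vnorm ?e = 1"
  proof -
    have "(\<Sum>i<n. (cmod (?e $ i))^2) = (\<Sum>i<n. if i = j then 1 else 0)"
      using j by (intro sum.cong refl) auto
    also have "\<dots> = 1" using j by simp
    finally show ?thesis by (simp add: vnorm_def)
  qed
  have "(A *\<^sub>v ?e) $ i = A $$ (i,j)" if "i < n" for i
  proof -
    have "(A *\<^sub>v ?e) $ i = (\<Sum>k<n. A $$ (i,k) * (if k = j then 1 else 0))"
      using j by (subst mult_vec_index[OF A(1) unit_vec_carrier that]) (auto intro!: sum.cong)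
    also have "\<dots> = A $$ (i,j)" using j by (simp add: if_distrib sum.delta cong: if_cong)
    finally show ?thesis .
  qed
  then have "(vnorm (A *\<^sub>v ?e))^2 = (\<Sum>i<n. (cmod (A $$ (i,j)))^2)"
    using A by (simp add: vnorm_sq)
  moreover have "vnorm (A *\<^sub>v ?e) \<le> 1" using opnorm_ge[OF A(1) _ vn] A by simp
  moreover have "0 \<le> vnorm (A *\<^sub>v ?e)" by (rule vnorm_nonneg)
  ultimately show ?thesis by (metis power_le_one)
qed

lemma HS_bound:
  assumes A: "A \<in> carrier_mat n n" "opnorm A = 1"
  shows "(\<Sum>i<n. \<Sum>j<n. (cmod (A $$ (i,j)))^2) \<le> n"
proof -
  have "(\<Sum>i<n. \<Sum>j<n. (cmod (A $$ (i,j)))^2) = (\<Sum>j<n. \<Sum>i<n. (cmod (A $$ (i,j)))^2)"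
    by (rule sum.swap)
  also have "\<dots> \<le> (\<Sum>j<n. 1)" using col_bound[OF A] by (intro sum_mono) auto
  finally show ?thesis by simp
qed

lemma tensor_vnorm:
  assumes "\<And>n. n < N \<Longrightarrow> (\<Sum>x<2. (cmod (w n $ x))^2) = 1"
  shows "vnorm (tensor_vecs N w) = 1"
proof -
  have "(\<Sum>i<2^N. (cmod (tensor_vecs N w $ i))^2) = (\<Sum>i<2^N. \<Prod>n<N. (cmod (w n $ qbit n i))^2)"
    by (intro sum.cong refl) (simp add: tensor_vecs_index prod_power_distrib flip: prod_norm)
  also have "\<dots> = (\<Sum>b\<in>bits {..<N}. \<Prod>n<N. (cmod (w n $ b n))^2)"
    by (rule sum_bits_conv) simp
  also have "\<dots> = (\<Prod>n<N. \<Sum>x<2. (cmod (w n $ x))^2)"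
    by (subst sum_prod_PiE) auto
  also have "\<dots> = 1" using assms by simp
  finally show ?thesis by (simp add: vnorm_def)
qed

lemma quad_bound:
  assumes A: "A \<in> carrier_mat (2^N) (2^N)" "opnorm A = 1"
    and w: "\<And>n. n < N \<Longrightarrow> (\<Sum>x<2. (cmod (w n $ x))^2) = 1"
  shows "cmod (KF N A (\<lambda>n. Pv (w n))) \<le> 1"
proof -
  let ?W = "tensor_vecs N w"
  have vW: "vnorm ?W = 1" by (rule tensor_vnorm[OF w])
  have vAW: "vnorm (A *\<^sub>v ?W) \<le> 1" using opnorm_ge[OF A(1) tensor_vecs_carrier vW] A by simp
  have "KF N A (\<lambda>n. Pv (w n)) = (\<Sum>i<2^N. (A *\<^sub>v ?W) $ i * cnj (?W $ i))"
    by (simp add: tensor_quad[OF A(1), symmetric] scalar_prod_def atLeast0LessThan)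
  then have "cmod (KF N A (\<lambda>n. Pv (w n))) \<le> (\<Sum>i<2^N. cmod ((A *\<^sub>v ?W) $ i) * cmod (?W $ i))"
    by (auto intro: order_trans[OF norm_sum] simp: norm_mult)
  also have "\<dots> \<le> (\<Sum>i<2^N. ((cmod ((A *\<^sub>v ?W) $ i))^2 + (cmod (?W $ i))^2) / 2)"
  proof (intro sum_mono)
    fix i
    have "0 \<le> (cmod ((A *\<^sub>v ?W) $ i) - cmod (?W $ i))^2" by simp
    then show "cmod ((A *\<^sub>v ?W) $ i) * cmod (?W $ i) \<le> ((cmod ((A *\<^sub>v ?W) $ i))^2 + (cmod (?W $ i))^2) / 2"
      by (simp add: power2_diff)
  qed
  also have "\<dots> = ((vnorm (A *\<^sub>v ?W))^2 + (vnorm ?W)^2) / 2"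
    using A by (simp add: vnorm_sq sum.distrib add_divide_distrib sum_divide_distrib)
  also have "\<dots> \<le> 1"
    using vAW vW vnorm_nonneg[of "A *\<^sub>v ?W"] by (simp add: power_le_one)
  finally show ?thesis .
qed


definition perp :: "complex vec \<Rightarrow> complex vec" where
  "perp v = vec 2 (\<lambda>i. if i = 0 then - cnj (v$1) else cnj (v$0))"

lemma unit2: "(\<Sum>x<2. (cmod (v $ x))^2) = 1 \<Longrightarrow> v$0 * cnj (v$0) + v$1 * cnj (v$1) = 1"
proof -
  assume h: "(\<Sum>x<2. (cmod (v $ x))^2) = 1"
  have "complex_of_real (\<Sum>x<2. (cmod (v $ x))^2) = v$0 * cnj (v$0) + v$1 * cnj (v$1)"
    by (simp only: sum2 of_real_add complex_norm_square)
  then show ?thesis using h by simp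
qed

lemma perp_unit: "(\<Sum>x<2. (cmod (v $ x))^2) = 1 \<Longrightarrow> (\<Sum>x<2. (cmod (perp v $ x))^2) = 1"
  by (simp add: perp_def sum2 add.commute)

lemma sg_perp:
  assumes "(\<Sum>x<2. (cmod (v $ x))^2) = 1" "a < 2" "b < 2"
  shows "sg v a b = 2 * Pv v a b - Pv (perp v) a b"
proof -
  have u: "v$0 * cnj (v$0) + v$1 * cnj (v$1) = 1" using unit2[OF assms(1)] .
  have "a = 0 \<or> a = 1" "b = 0 \<or> b = 1" using assms by auto
  then show ?thesis using u
    by (auto simp: sg_def Pv_def perp_def algebra_simps)
qed

lemma Pv_perp_sum:
  assumes "(\<Sum>x<2. (cmod (v $ x))^2) = 1" "a < 2" "b < 2"
  shows "Pv v a b + Pv (perp v) a b = (if a = b then 1 else 0)"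
proof -
  have u: "v$0 * cnj (v$0) + v$1 * cnj (v$1) = 1" using unit2[OF assms(1)] .
  have "a = 0 \<or> a = 1" "b = 0 \<or> b = 1" using assms by auto
  then show ?thesis using u
    by (auto simp: Pv_def perp_def algebra_simps)
qed

lemma Gs_cong:
  assumes "\<And>n a b. n \<in> S \<Longrightarrow> a < 2 \<Longrightarrow> b < 2 \<Longrightarrow> g n a b = g' n a b"
  shows "Gs S OS g = Gs S OS g'"
  unfolding Gs_def
proof (intro sum.cong refl arg_cong2[where f="(*)"] prod.cong)
  fix a a' n assume "a \<in> bits S" "a' \<in> bits S" "n \<in> S"
  then have "a n \<in> {..<2}" "a' n \<in> {..<2}" by (auto intro: PiE_mem)
  then show "g n (a' n) (a n) = g' n (a' n) (a n)" using assms \<open>n \<in> S\<close> by auto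
qed

lemma Gs_multilin:
  assumes "finite S"
  shows "Gs S OS (\<lambda>n a b. \<Sum>y<2. f n y a b) = (\<Sum>d\<in>bits S. Gs S OS (\<lambda>n. f n (d n)))"
proof -
  have "Gs S OS (\<lambda>n a b. \<Sum>y<2. f n y a b) =
     (\<Sum>a\<in>bits S. \<Sum>a'\<in>bits S. Mred S OS a a' * (\<Sum>d\<in>bits S. \<Prod>n\<in>S. f n (d n) (a' n) (a n)))"
    unfolding Gs_def using assms by (subst sum_prod_PiE) auto
  also have "\<dots> = (\<Sum>d\<in>bits S. Gs S OS (\<lambda>n. f n (d n)))"
    unfolding Gs_def sum_distrib_left
    by (subst sum.swap, rule sum.cong[OF refl], subst (2) sum.swap, simp)
  finally show ?thesis .
qed

lemma Gs_scale:
  "Gs S OS (\<lambda>n a b. c n * g n a b) = (\<Prod>n\<in>S. c n) * Gs S OS g"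
  unfolding Gs_def by (simp add: prod.distrib sum_distrib_left mult_ac)

definition e0 :: "complex vec" where "e0 = vec 2 (\<lambda>i. if i = 0 then 1 else 0)"

lemma Gs_Pv_bound:
  assumes S: "S \<subseteq> {..<N}" and A: "opnorm (Omat N S OS) = 1"
    and u: "\<And>n. n \<in> S \<Longrightarrow> (\<Sum>x<2. (cmod (u n $ x))^2) = 1"
  shows "cmod (Gs S OS (\<lambda>n. Pv (u n))) \<le> 1"
proof -
  define uu where "uu n = (if n \<in> S then u n else e0)" for n
  have "KF N (Omat N S OS) (\<lambda>n. Pv (uu n)) = Gs S OS (\<lambda>n. Pv (uu n)) * (\<Prod>n\<in>{..<N}-S. \<Sum>x<2. Pv (uu n) x x)"
    by (rule KF_Omat[OF S])
  also have "(\<Prod>n\<in>{..<N}-S. \<Sum>x<2. Pv (uu n) x x) = 1"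
    by (intro prod.neutral) (simp add: uu_def e0_def Pv_def sum2)
  also have "Gs S OS (\<lambda>n. Pv (uu n)) = Gs S OS (\<lambda>n. Pv (u n))"
    by (rule Gs_cong) (simp add: uu_def)
  finally have eq: "KF N (Omat N S OS) (\<lambda>n. Pv (uu n)) = Gs S OS (\<lambda>n. Pv (u n))" by simp
  have "cmod (KF N (Omat N S OS) (\<lambda>n. Pv (uu n))) \<le> 1"
  proof (rule quad_bound[OF Omat_carrier A])
    fix n show "(\<Sum>x<2. (cmod (uu n $ x))^2) = 1"
      using u by (cases "n \<in> S") (auto simp: uu_def e0_def sum2)
  qed
  then show ?thesis using eq by simp
qed

lemma Gs_sg_bound:
  assumes sic: "sic_set \<psi>" and S: "S \<subseteq> {..<N}" and A: "opnorm (Omat N S OS) = 1"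
    and t: "\<And>n. n \<in> S \<Longrightarrow> t n < 4"
  shows "cmod (Gs S OS (\<lambda>n. sg (\<psi> (t n)))) \<le> 3 ^ card S"
proof -
  have fin: "finite S" using S finite_subset by auto
  define coef where "coef y = (if y = 0 then 2 else - 1 :: complex)" for y :: nat
  define wv where "wv n y = (if y = 0 then \<psi> (t n) else perp (\<psi> (t n)))" for n y :: nat
  have un: "(\<Sum>x<2. (cmod (\<psi> (t n) $ x))^2) = 1" if "n \<in> S" for n
    using sic_basic(3)[OF sic t[OF that]] .
  have "Gs S OS (\<lambda>n. sg (\<psi> (t n))) = Gs S OS (\<lambda>n a b. \<Sum>y<2. coef y * Pv (wv n y) a b)"
    by (rule Gs_cong) (simp add: sum2 coef_def wv_def sg_perp[OF un])
  also have "\<dots> = (\<Sum>d\<in>bits S. Gs S OS (\<lambda>n a b. coef (d n) * Pv (wv n (d n)) a b))"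
    by (rule Gs_multilin[OF fin])
  also have "\<dots> = (\<Sum>d\<in>bits S. (\<Prod>n\<in>S. coef (d n)) * Gs S OS (\<lambda>n. Pv (wv n (d n))))"
    by (simp only: Gs_scale)
  finally have eq: "Gs S OS (\<lambda>n. sg (\<psi> (t n))) = \<dots>" .
  have "cmod (Gs S OS (\<lambda>n. sg (\<psi> (t n)))) \<le> (\<Sum>d\<in>bits S. (\<Prod>n\<in>S. cmod (coef (d n))) * 1)"
    unfolding eq
  proof (rule order_trans[OF norm_sum], intro sum_mono)
    fix d assume d: "d \<in> bits S"
    have "cmod (Gs S OS (\<lambda>n. Pv (wv n (d n)))) \<le> 1"
    proof (rule Gs_Pv_bound[OF S A])
      fix n assume "n \<in> S"
      then show "(\<Sum>x<2. (cmod (wv n (d n) $ x))^2) = 1"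
        using un perp_unit by (auto simp: wv_def)
    qed
    then show "cmod ((\<Prod>n\<in>S. coef (d n)) * Gs S OS (\<lambda>n. Pv (wv n (d n)))) \<le> (\<Prod>n\<in>S. cmod (coef (d n))) * 1"
      by (simp add: norm_mult prod_norm mult_left_le)
  qed
  also have "\<dots> = (\<Prod>n\<in>S. \<Sum>y<2. cmod (coef y))"
    using fin sum_prod_PiE[where f="\<lambda>n y. cmod (coef y)" and A=S and B="\<lambda>_. {..<2}"] by simp
  also have "\<dots> = 3 ^ card S" by (simp add: sum2 coef_def)
  finally show ?thesis .
qed


lemma KF_cong:
  assumes "\<And>n a b. n < N \<Longrightarrow> a < 2 \<Longrightarrow> b < 2 \<Longrightarrow> g n a b = g' n a b"
  shows "KF N A g = KF N A g'"
  unfolding KF_def using assms by (intro sum.cong refl arg_cong2[where f="(*)"] prod.cong) auto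

lemma KF_scale: "KF N A (\<lambda>n a b. c n * g n a b) = (\<Prod>n<N. c n) * KF N A g"
  unfolding KF_def by (simp add: prod.distrib sum_distrib_left mult_ac)

lemma KF_delta: "A \<in> carrier_mat (2^N) (2^N) \<Longrightarrow> KF N A (\<lambda>n a b. if a = b then 1 else 0) = ctrace A"
proof -
  assume A: "A \<in> carrier_mat (2^N) (2^N)"
  have "KF N A (\<lambda>n a b. if a = b then 1 else 0) = (\<Sum>i<2^N. \<Sum>j<2^N. A $$ (i,j) * (if j = i then 1 else 0))"
    unfolding KF_def by (intro sum.cong refl) (simp add: prod_delta_bits)
  also have "\<dots> = ctrace A" using A by (simp add: ctrace_def if_distrib sum.delta cong: if_cong)
  finally show ?thesis .
qed

lemma KF_sum_part:
  assumes S: "S \<subseteq> {..<N}" and fin: "\<And>n. finite (B n)"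
  shows "(\<Sum>u\<in>PiE ({..<N} - S) B. KF N A (\<lambda>n. h n (merge S t u n))) =
     KF N A (\<lambda>n a b. if n \<in> S then h n (t n) a b else \<Sum>x\<in>B n. h n x a b)"
proof -
  define R where "R = {..<N} - S"
  have SR: "S \<inter> R = {}" "S \<union> R = {..<N}" using S by (auto simp: R_def)
  have finS: "finite S" "finite R" using S finite_subset by (auto simp: R_def)
  have split: "(\<Prod>n<N. F n) = (\<Prod>n\<in>S. F n) * (\<Prod>n\<in>R. F n)" for F :: "nat \<Rightarrow> complex"
    using prod.union_disjoint[OF finS SR(1), of F] SR(2) by simp
  have "(\<Sum>u\<in>PiE R B. KF N A (\<lambda>n. h n (merge S t u n))) =
     (\<Sum>i<2^N. \<Sum>j<2^N. A $$ (i,j) * (\<Sum>u\<in>PiE R B. \<Prod>n<N. h n (merge S t u n) (qbit n j) (qbit n i)))"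
    unfolding KF_def
    by (subst sum.swap, rule sum.cong[OF refl], subst sum.swap) (simp add: sum_distrib_left)
  also have "\<dots> = (\<Sum>i<2^N. \<Sum>j<2^N. A $$ (i,j) * ((\<Prod>n\<in>S. h n (t n) (qbit n j) (qbit n i)) *
         (\<Prod>n\<in>R. \<Sum>x\<in>B n. h n x (qbit n j) (qbit n i))))"
  proof (intro sum.cong refl arg_cong2[where f="(*)"])
    fix i j
    have "(\<Sum>u\<in>PiE R B. \<Prod>n<N. h n (merge S t u n) (qbit n j) (qbit n i)) =
          (\<Sum>u\<in>PiE R B. (\<Prod>n\<in>S. h n (t n) (qbit n j) (qbit n i)) * (\<Prod>n\<in>R. h n (u n) (qbit n j) (qbit n i)))"
      unfolding split using SR(1) by (intro sum.cong refl arg_cong2[where f="(*)"] prod.cong) (auto simp: merge_def)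
    also have "\<dots> = (\<Prod>n\<in>S. h n (t n) (qbit n j) (qbit n i)) * (\<Prod>n\<in>R. \<Sum>x\<in>B n. h n x (qbit n j) (qbit n i))"
      using finS fin sum_prod_PiE[of R B "\<lambda>n x. h n x (qbit n j) (qbit n i)"] by (simp add: sum_distrib_left[symmetric])
    finally show "(\<Sum>u\<in>PiE R B. \<Prod>n<N. h n (merge S t u n) (qbit n j) (qbit n i)) = \<dots>" .
  qed
  also have "\<dots> = KF N A (\<lambda>n a b. if n \<in> S then h n (t n) a b else \<Sum>x\<in>B n. h n x a b)"
    unfolding KF_def split using SR(1)
    by (intro sum.cong refl arg_cong2[where f="(*)"] prod.cong) (auto simp: R_def)
  finally show ?thesis by (simp add: R_def)
qed

lemma density_quad:
  assumes "density_matrix N \<rho>"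
  shows "Im (KF N \<rho> (\<lambda>n. Pv (w n))) = 0" "0 \<le> Re (KF N \<rho> (\<lambda>n. Pv (w n)))"
proof -
  have c: "\<rho> \<in> carrier_mat (2^N) (2^N)" using assms by (simp add: density_matrix_def)
  have "KF N \<rho> (\<lambda>n. Pv (w n)) = (\<rho> *\<^sub>v tensor_vecs N w) \<bullet>c tensor_vecs N w"
    using tensor_quad[OF c] by simp
  then show "Im (KF N \<rho> (\<lambda>n. Pv (w n))) = 0" "0 \<le> Re (KF N \<rho> (\<lambda>n. Pv (w n)))"
    using assms by (auto simp: density_matrix_def)
qed

lemma KF_prob:
  assumes "density_matrix N \<rho>"
  shows "KF N \<rho> (\<lambda>n. Pv (\<psi> (s n))) = complex_of_real (2^N * sic_prob \<psi> N \<rho> s)"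
    and "0 \<le> sic_prob \<psi> N \<rho> s"
proof -
  have c: "\<rho> \<in> carrier_mat (2^N) (2^N)" using assms by (simp add: density_matrix_def)
  have e: "sic_prob \<psi> N \<rho> s = Re (KF N \<rho> (\<lambda>n. Pv (\<psi> (s n)))) / 2^N"
    unfolding sic_prob_def Let_def tensor_quad[OF c] by simp
  show "KF N \<rho> (\<lambda>n. Pv (\<psi> (s n))) = complex_of_real (2^N * sic_prob \<psi> N \<rho> s)"
    using density_quad(1)[OF assms, of "\<lambda>n. \<psi> (s n)"] unfolding e by (simp add: complex_eq_iff)
  show "0 \<le> sic_prob \<psi> N \<rho> s" unfolding e using density_quad(2)[OF assms] by simp
qed

lemma prob_sum_one:
  assumes "sic_set \<psi>" "density_matrix N \<rho>"
  shows "(\<Sum>s\<in>outcomes N. sic_prob \<psi> N \<rho> s) = 1"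
proof -
  have c: "\<rho> \<in> carrier_mat (2^N) (2^N)" "ctrace \<rho> = 1" using assms by (auto simp: density_matrix_def)
  have "complex_of_real (2^N * (\<Sum>s\<in>outcomes N. sic_prob \<psi> N \<rho> s)) = 2^N * ctrace \<rho>"
    using norm_KF[OF assms(1) c(1)] KF_prob(1)[OF assms(2)] by (simp add: sum_distrib_left)
  then have "complex_of_real (2^N * (\<Sum>s\<in>outcomes N. sic_prob \<psi> N \<rho> s)) = complex_of_real (2^N)"
    using c(2) by simp
  then have "(2::real)^N * (\<Sum>s\<in>outcomes N. sic_prob \<psi> N \<rho> s) = 2^N" by (simp only: of_real_eq_iff)
  then show ?thesis by simp
qed

lemma prob_unbiased:
  assumes "sic_set \<psi>" "density_matrix N \<rho>" "Ob \<in> carrier_mat (2^N) (2^N)"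
  shows "(\<Sum>s\<in>outcomes N. complex_of_real (sic_prob \<psi> N \<rho> s) * ctrace (Ob * sic_shadow \<psi> N s)) = ctrace (Ob * \<rho>)"
proof -
  have c: "\<rho> \<in> carrier_mat (2^N) (2^N)" using assms by (auto simp: density_matrix_def)
  have "2^N * (\<Sum>s\<in>outcomes N. complex_of_real (sic_prob \<psi> N \<rho> s) * ctrace (Ob * sic_shadow \<psi> N s)) = 2^N * ctrace (Ob * \<rho>)"
    using unbiased_KF[OF assms(1) c assms(3)] KF_prob(1)[OF assms(2)] shadow_KF[OF assms(3)]
    by (simp add: sum_distrib_left mult.assoc)
  then show ?thesis by simp
qed


definition e1 :: "complex vec" where "e1 = vec 2 (\<lambda>i. if i = 1 then 1 else 0)"

lemma e01_sum: "a < 2 \<Longrightarrow> b < 2 \<Longrightarrow> Pv e0 a b + Pv e1 a b = (if a = b then 1 else 0)"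
  by (auto simp: Pv_def e0_def e1_def less_2_cases_iff)

lemma marginal_bound:
  assumes sic: "sic_set \<psi>" and dens: "density_matrix N \<rho>" and S: "S \<subseteq> {..<N}"
    and t: "\<And>n. n \<in> S \<Longrightarrow> t n < 4"
  shows "(\<Sum>u\<in>PiE ({..<N}-S) (\<lambda>_. {..<4}). sic_prob \<psi> N \<rho> (merge S t u)) \<le> 1 / 2^card S"
proof -
  have c: "\<rho> \<in> carrier_mat (2^N) (2^N)" "ctrace \<rho> = 1" using dens by (auto simp: density_matrix_def)
  have finS: "finite S" using S finite_subset by auto
  have cR: "card ({..<N} - S) = N - card S" using S finS by (simp add: card_Diff_subset)
  have kN: "card S \<le> N" using S card_mono[of "{..<N}" S] by simp
  define g0 where "g0 n a b = (if n \<in> S then Pv (\<psi> (t n)) a b else (if a = b then 1 else 0))" for n a b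
  define f where "f n y = (if n \<in> S then (if y = 0 then \<psi> (t n) else perp (\<psi> (t n))) else (if y = 0 then e0 else e1))" for n y :: nat
  define C where "C n = (if n \<in> S then {0} else {..<2::nat})" for n :: nat
  define T where "T c = Re (KF N \<rho> (\<lambda>n. Pv (f n (c n))))" for c
  have un: "(\<Sum>x<2. (cmod (\<psi> (t n) $ x))^2) = 1" if "n \<in> S" for n
    using sic_basic(3)[OF sic t[OF that]] .
  have "complex_of_real (2^N * (\<Sum>u\<in>PiE ({..<N}-S) (\<lambda>_. {..<4}). sic_prob \<psi> N \<rho> (merge S t u)))
     = (\<Sum>u\<in>PiE ({..<N}-S) (\<lambda>_. {..<4}). KF N \<rho> (\<lambda>n. Pv (\<psi> (merge S t u n))))"
    by (simp add: KF_prob(1)[OF dens] sum_distrib_left)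
  also have "\<dots> = KF N \<rho> (\<lambda>n a b. if n \<in> S then Pv (\<psi> (t n)) a b else \<Sum>x<4. Pv (\<psi> x) a b)"
    by (rule KF_sum_part[OF S]) simp
  also have "\<dots> = KF N \<rho> (\<lambda>n a b. (if n \<in> S then 1 else 2) * g0 n a b)"
    by (rule KF_cong) (simp add: g0_def sic_frame[OF sic])
  also have "\<dots> = 2 ^ (N - card S) * KF N \<rho> g0"
  proof -
    have "(\<Prod>n<N. (if n \<in> S then 1 else 2::complex)) = 2 ^ card ({..<N} - S)"
      by (simp add: prod.If_cases Diff_eq)
    then show ?thesis unfolding KF_scale cR by simp
  qed
  finally have e1: "complex_of_real (2^N * (\<Sum>u\<in>PiE ({..<N}-S) (\<lambda>_. {..<4}). sic_prob \<psi> N \<rho> (merge S t u)))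
     = 2 ^ (N - card S) * KF N \<rho> g0" .
  have "KF N \<rho> g0 = KF N \<rho> (\<lambda>n a b. \<Sum>y\<in>C n. Pv (f n y) a b)"
    by (rule KF_cong) (simp add: g0_def C_def f_def sum2 e01_sum)
  also have "\<dots> = (\<Sum>c\<in>PiE {..<N} C. KF N \<rho> (\<lambda>n. Pv (f n (c n))))"
    by (rule KF_sum[symmetric]) (simp add: C_def)
  finally have e2: "Re (KF N \<rho> g0) = (\<Sum>c\<in>PiE {..<N} C. T c)" by (simp add: T_def)
  have "(\<Sum>c\<in>bits {..<N}. KF N \<rho> (\<lambda>n. Pv (f n (c n)))) = KF N \<rho> (\<lambda>n a b. \<Sum>y<2. Pv (f n y) a b)"
    by (rule KF_sum) simp
  also have "\<dots> = KF N \<rho> (\<lambda>n a b. if a = b then 1 else 0)"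
  proof (rule KF_cong)
    fix n a b :: nat assume "n < N" "a < 2" "b < 2"
    then show "(\<Sum>y<2. Pv (f n y) a b) = (if a = b then 1 else 0)"
      by (cases "n \<in> S") (auto simp: sum2 f_def Pv_perp_sum[OF un] e01_sum)
  qed
  also have "\<dots> = 1" using KF_delta[OF c(1)] c(2) by simp
  finally have e3: "(\<Sum>c\<in>bits {..<N}. T c) = 1" unfolding T_def by (metis Re_sum one_complex.sel(1))
  have "(\<Sum>c\<in>PiE {..<N} C. T c) \<le> (\<Sum>c\<in>bits {..<N}. T c)"
  proof (rule sum_mono2)
    show "PiE {..<N} C \<subseteq> bits {..<N}" by (rule PiE_mono) (auto simp: C_def)
    show "0 \<le> T c" for c unfolding T_def by (rule density_quad(2)[OF dens])
  qed (simp add: finite_PiE)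
  then have le: "Re (KF N \<rho> g0) \<le> 1" using e2 e3 by simp
  have "2^N * (\<Sum>u\<in>PiE ({..<N}-S) (\<lambda>_. {..<4}). sic_prob \<psi> N \<rho> (merge S t u)) = 2 ^ (N - card S) * Re (KF N \<rho> g0)"
    using arg_cong[OF e1, of Re] by simp
  also have "\<dots> \<le> 2 ^ (N - card S)" using le by simp
  finally have "2^N * (\<Sum>u\<in>PiE ({..<N}-S) (\<lambda>_. {..<4}). sic_prob \<psi> N \<rho> (merge S t u)) \<le> 2 ^ (N - card S)" .
  moreover have "(2::real) ^ N = 2 ^ (N - card S) * 2 ^ card S" using kN by (simp flip: power_add)
  ultimately show ?thesis by (simp add: field_simps)
qed


lemma X_Gs:
  assumes sic: "sic_set \<psi>" and S: "S \<subseteq> {..<N}" and s: "\<And>n. n < N \<Longrightarrow> s n < 4"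
  shows "ctrace (Omat N S OS * sic_shadow \<psi> N s) = Gs S OS (\<lambda>n. sg (\<psi> (s n)))"
proof -
  have "ctrace (Omat N S OS * sic_shadow \<psi> N s) = KF N (Omat N S OS) (\<lambda>n. sg (\<psi> (s n)))"
    by (rule shadow_KF[OF Omat_carrier])
  also have "\<dots> = Gs S OS (\<lambda>n. sg (\<psi> (s n))) * (\<Prod>n\<in>{..<N}-S. \<Sum>x<2. sg (\<psi> (s n)) x x)"
    by (rule KF_Omat[OF S])
  also have "(\<Prod>n\<in>{..<N}-S. \<Sum>x<2. sg (\<psi> (s n)) x x) = 1"
  proof (intro prod.neutral ballI)
    fix n assume "n \<in> {..<N}-S"
    then show "(\<Sum>x<2. sg (\<psi> (s n)) x x) = 1" using sg_trace[OF sic s[of n]] by (simp add: sum2)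
  qed
  finally show ?thesis by simp
qed

lemma HSn_Mred_bound:
  assumes S: "S \<subseteq> {..<N}" and A: "opnorm (Omat N S OS) = 1"
  shows "HSn S (Mred S OS) \<le> 2 ^ card S"
proof -
  have finS: "finite S" using S finite_subset by auto
  have kN: "card S \<le> N" using S card_mono[of "{..<N}" S] by simp
  have "2 ^ (N - card S) * HSn S (Mred S OS) \<le> 2^N"
    using HS_Omat[OF S, of OS] HS_bound[OF Omat_carrier A] by (simp add: HSn_def)
  moreover have "(2::real) ^ N = 2 ^ (N - card S) * 2 ^ card S" using kN by (simp flip: power_add)
  ultimately show ?thesis by simp
qed

lemma second_moment:
  assumes sic: "sic_set \<psi>" and dens: "density_matrix N \<rho>" and S: "S \<subseteq> {..<N}"
    and A: "opnorm (Omat N S OS) = 1"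
  shows "(\<Sum>s\<in>outcomes N. sic_prob \<psi> N \<rho> s * (cmod (ctrace (Omat N S OS * sic_shadow \<psi> N s)))^2) \<le> 6 ^ card S"
proof -
  define R where "R = {..<N} - S"
  have SR: "S \<inter> R = {}" "S \<union> R = {..<N}" using S by (auto simp: R_def)
  have finS: "finite S" using S finite_subset by auto
  define G where "G t = Gs S OS (\<lambda>n. sg (\<psi> (t n)))" for t
  define p where "p s = sic_prob \<psi> N \<rho> s" for s
  have "(\<Sum>s\<in>outcomes N. p s * (cmod (ctrace (Omat N S OS * sic_shadow \<psi> N s)))^2) =
     (\<Sum>t\<in>PiE S (\<lambda>_. {..<4::nat}). \<Sum>u\<in>PiE R (\<lambda>_. {..<4::nat}). p (merge S t u) * (cmod (ctrace (Omat N S OS * sic_shadow \<psi> N (merge S t u))))^2)"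
    unfolding outcomes_eq SR(2)[symmetric] by (rule sum_PiE_split[OF SR(1)])
  also have "\<dots> = (\<Sum>t\<in>PiE S (\<lambda>_. {..<4::nat}). (cmod (G t))^2 * (\<Sum>u\<in>PiE R (\<lambda>_. {..<4::nat}). p (merge S t u)))"
  proof (intro sum.cong refl)
    fix t :: "nat \<Rightarrow> nat" assume t: "t \<in> PiE S (\<lambda>_. {..<4::nat})"
    have "p (merge S t u) * (cmod (ctrace (Omat N S OS * sic_shadow \<psi> N (merge S t u))))^2 = (cmod (G t))^2 * p (merge S t u)"
      if u: "u \<in> PiE R (\<lambda>_. {..<4::nat})" for u :: "nat \<Rightarrow> nat"
    proof -
      have m4: "merge S t u n < 4" if "n < N" for n
        using that t u SR by (auto simp: merge_def dest: PiE_mem)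
      have "ctrace (Omat N S OS * sic_shadow \<psi> N (merge S t u)) = Gs S OS (\<lambda>n. sg (\<psi> (merge S t u n)))"
        by (rule X_Gs[OF sic S m4])
      also have "\<dots> = G t" unfolding G_def by (rule Gs_cong) (simp add: merge_def)
      finally show ?thesis by simp
    qed
    then have "(\<Sum>u\<in>PiE R (\<lambda>_. {..<4::nat}). p (merge S t u) * (cmod (ctrace (Omat N S OS * sic_shadow \<psi> N (merge S t u))))^2) =
       (\<Sum>u\<in>PiE R (\<lambda>_. {..<4::nat}). (cmod (G t))^2 * p (merge S t u))"
      by (intro sum.cong) auto
    then show "(\<Sum>u\<in>PiE R (\<lambda>_. {..<4::nat}). p (merge S t u) * (cmod (ctrace (Omat N S OS * sic_shadow \<psi> N (merge S t u))))^2) =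
       (cmod (G t))^2 * (\<Sum>u\<in>PiE R (\<lambda>_. {..<4::nat}). p (merge S t u))"
      by (simp add: sum_distrib_left)
  qed
  also have "\<dots> \<le> (\<Sum>t\<in>PiE S (\<lambda>_. {..<4::nat}). (cmod (G t))^2 * (1 / 2 ^ card S))"
  proof (intro sum_mono mult_left_mono)
    fix t assume t: "t \<in> PiE S (\<lambda>_. {..<4::nat})"
    show "(\<Sum>u\<in>PiE R (\<lambda>_. {..<4::nat}). p (merge S t u)) \<le> 1 / 2 ^ card S"
      unfolding p_def R_def by (rule marginal_bound[OF sic dens S]) (use t in \<open>auto dest: PiE_mem\<close>)
  qed simp
  also have "\<dots> = (\<Sum>t\<in>PiE S (\<lambda>_. {..<4::nat}). (cmod (G t))^2) / 2 ^ card S"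
    by (simp add: sum_divide_distrib)
  also have "\<dots> \<le> 6 ^ card S * HSn S (Mred S OS) / 2 ^ card S"
    unfolding G_def by (intro divide_right_mono sumsq_Gs_bound[OF sic finS]) simp
  also have "\<dots> \<le> 6 ^ card S * 2 ^ card S / 2 ^ card S"
    by (intro divide_right_mono mult_left_mono HSn_Mred_bound[OF S A]) auto
  also have "\<dots> = 6 ^ card S" by simp
  finally show ?thesis by (simp add: p_def)
qed


lemma exp_quad_bound:
  fixes x :: real
  assumes "x \<le> 7/10"
  shows "exp x \<le> 1 + x + 13/20 * x^2"
proof (cases "x \<le> 0")
  case True
  obtain t where t: "exp x = (\<Sum>m<3. x ^ m / fact m) + exp t / fact 3 * x ^ 3"
    using Maclaurin_exp_le[of x 3] by blast
  have x3: "x^3 \<le> 0" using True by (simp add: power3_eq_cube mult_nonpos_nonneg mult_nonneg_nonneg zero_le_mult_iff mult_le_0_iff)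
  have "exp t / fact 3 * x ^ 3 \<le> 0"
    using x3 by (intro mult_nonneg_nonpos) auto
  moreover have "(\<Sum>m<3. x ^ m / fact m) = 1 + x + x^2/2" by (simp add: numeral_eq_Suc)
  moreover have "0 \<le> x^2" by simp
  ultimately show ?thesis using t by linarith
next
  case False
  then have x0: "0 \<le> x" by simp
  obtain t where t: "\<bar>t\<bar> \<le> \<bar>x\<bar>" "exp x = (\<Sum>m<5. x ^ m / fact m) + exp t / fact 5 * x ^ 5"
    using Maclaurin_exp_le[of x 5] by blast
  have "t \<le> 1" using t(1) assms x0 by linarith
  then have "exp t \<le> exp 1" by simp
  also have "\<dots> \<le> 3" by (rule exp_le)
  finally have et: "exp t \<le> 3" .
  have s: "(\<Sum>m<5. x ^ m / fact m) = 1 + x + x^2/2 + x^3/6 + x^4/24" by (simp add: numeral_eq_Suc)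
  have f5: "(fact 5 :: real) = 120" by (simp add: fact_numeral)
  have x2: "x^2 \<le> 49/100"
  proof -
    have "x^2 \<le> (7/10)^2" using assms x0 by (intro power_mono) auto
    then show ?thesis by (simp add: power2_eq_square)
  qed
  have p3: "x^3 \<le> 7/10 * x^2"
  proof -
    have "x * x^2 \<le> 7/10 * x^2" using assms x0 by (intro mult_right_mono) auto
    moreover have "x^3 = x * x^2" by (simp add: power3_eq_cube power2_eq_square)
    ultimately show ?thesis by linarith
  qed
  have p4: "x^4 \<le> 49/100 * x^2"
  proof -
    have "x^2 * x^2 \<le> 49/100 * x^2" using x2 by (intro mult_right_mono) auto
    moreover have "x^4 = x^2 * x^2" by (subst power_add[symmetric]) simp
    ultimately show ?thesis by linarith
  qed
  have p5: "x^5 \<le> 343/1000 * x^2"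
  proof -
    have "x^3 \<le> (7/10)^3" using assms x0 by (intro power_mono) auto
    moreover have "(7/10::real)^3 = 343/1000" by (simp add: power3_eq_cube)
    ultimately have "x^3 \<le> 343/1000" by simp
    then have "x^3 * x^2 \<le> 343/1000 * x^2" by (intro mult_right_mono) auto
    moreover have "x^5 = x^3 * x^2" by (subst power_add[symmetric]) simp
    ultimately show ?thesis by linarith
  qed
  have e5: "exp t / fact 5 * x ^ 5 \<le> 3 / 120 * x^5"
  proof -
    have "exp t / 120 \<le> 3 / 120" using et by simp
    then have "exp t / 120 * x^5 \<le> 3 / 120 * x^5" using x0 by (intro mult_right_mono) auto
    then show ?thesis by (simp add: f5)
  qed
  have "exp x \<le> 1 + x + x^2/2 + x^3/6 + x^4/24 + 3/120 * x^5" using t(2) s e5 by linarith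
  also have "\<dots> \<le> 1 + x + 13/20 * x^2" using p3 p4 p5 zero_le_power2[of x] by linarith
  finally show ?thesis .
qed

lemma sum_prod_power:
  fixes f :: "'s \<Rightarrow> 'c :: comm_semiring_1"
  assumes "finite \<Omega>"
  shows "(\<Sum>ss\<in>PiE {0..<M} (\<lambda>_. \<Omega>). \<Prod>m<M. f (ss m)) = (\<Sum>s\<in>\<Omega>. f s) ^ M"
proof -
  have "(\<Sum>ss\<in>PiE {0..<M} (\<lambda>_. \<Omega>). \<Prod>m<M. f (ss m)) = (\<Sum>ss\<in>PiE {0..<M} (\<lambda>_. \<Omega>). \<Prod>m\<in>{0..<M}. f (ss m))"
    by (simp add: atLeast0LessThan)
  also have "\<dots> = (\<Prod>m\<in>{0..<M}. \<Sum>s\<in>\<Omega>. f s)"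
    using assms by (subst sum_prod_PiE[where f="\<lambda>m s. f s"]) auto
  finally show ?thesis by simp
qed

lemma chernoff_tail:
  fixes p Y :: "'s \<Rightarrow> real" and \<Omega> :: "'s set" and V \<epsilon> :: real
  assumes fin: "finite \<Omega>" and pnn: "\<And>s. s \<in> \<Omega> \<Longrightarrow> 0 \<le> p s" and p1: "(\<Sum>s\<in>\<Omega>. p s) = 1"
    and mean: "(\<Sum>s\<in>\<Omega>. p s * Y s) = 0" and var: "(\<Sum>s\<in>\<Omega>. p s * (Y s)^2) \<le> V"
    and V: "0 < V" and eps: "0 < \<epsilon>"
    and bnd: "\<And>s. s \<in> \<Omega> \<Longrightarrow> 7/10 * \<epsilon> / V * Y s \<le> 7/10"
  shows "(\<Sum>ss\<in>{ss\<in>PiE {0..<M} (\<lambda>_. \<Omega>). real M * \<epsilon> < (\<Sum>m<M. Y (ss m))}. \<Prod>m<M. p (ss m))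
          \<le> exp (- 3/8 * real M * \<epsilon>^2 / V)"
proof -
  define lam where "lam = 7/10 * \<epsilon> / V"
  have lam0: "0 < lam" using V eps by (simp add: lam_def)
  let ?\<Omega>M = "PiE {0..<M} (\<lambda>_. \<Omega>)"
  have finM: "finite ?\<Omega>M" using fin by (simp add: finite_PiE)
  have wnn: "0 \<le> (\<Prod>m<M. p (ss m))" if "ss \<in> ?\<Omega>M" for ss
    using that pnn by (intro prod_nonneg) (auto dest: PiE_mem)
  have "(\<Sum>ss\<in>{ss\<in>?\<Omega>M. real M * \<epsilon> < (\<Sum>m<M. Y (ss m))}. \<Prod>m<M. p (ss m))
     \<le> (\<Sum>ss\<in>{ss\<in>?\<Omega>M. real M * \<epsilon> < (\<Sum>m<M. Y (ss m))}. (\<Prod>m<M. p (ss m)) * exp (lam * ((\<Sum>m<M. Y (ss m)) - real M * \<epsilon>)))"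
  proof (intro sum_mono)
    fix ss assume "ss \<in> {ss\<in>?\<Omega>M. real M * \<epsilon> < (\<Sum>m<M. Y (ss m))}"
    then have "ss \<in> ?\<Omega>M" "real M * \<epsilon> < (\<Sum>m<M. Y (ss m))" by auto
    then have "1 \<le> exp (lam * ((\<Sum>m<M. Y (ss m)) - real M * \<epsilon>))" using lam0 by simp
    then show "(\<Prod>m<M. p (ss m)) \<le> (\<Prod>m<M. p (ss m)) * exp (lam * ((\<Sum>m<M. Y (ss m)) - real M * \<epsilon>))"
      using wnn[OF \<open>ss \<in> ?\<Omega>M\<close>] by (simp add: mult_le_cancel_left1)
  qed
  also have "\<dots> \<le> (\<Sum>ss\<in>?\<Omega>M. (\<Prod>m<M. p (ss m)) * exp (lam * ((\<Sum>m<M. Y (ss m)) - real M * \<epsilon>)))"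
    using finM wnn by (intro sum_mono2) auto
  also have "\<dots> = exp (- lam * real M * \<epsilon>) * (\<Sum>ss\<in>?\<Omega>M. \<Prod>m<M. p (ss m) * exp (lam * Y (ss m)))"
  proof -
    have "(\<Prod>m<M. p (ss m)) * exp (lam * ((\<Sum>m<M. Y (ss m)) - real M * \<epsilon>)) =
        exp (- lam * real M * \<epsilon>) * (\<Prod>m<M. p (ss m) * exp (lam * Y (ss m)))" for ss
    proof -
      have "exp (lam * ((\<Sum>m<M. Y (ss m)) - real M * \<epsilon>)) = exp (- lam * real M * \<epsilon>) * exp (\<Sum>m<M. lam * Y (ss m))"
        by (simp add: sum_distrib_left exp_add[symmetric] algebra_simps)
      also have "exp (\<Sum>m<M. lam * Y (ss m)) = (\<Prod>m<M. exp (lam * Y (ss m)))" by (rule exp_sum) simp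
      finally show ?thesis by (simp add: prod.distrib mult_ac)
    qed
    then show ?thesis by (simp add: sum_distrib_left)
  qed
  also have "\<dots> = exp (- lam * real M * \<epsilon>) * (\<Sum>s\<in>\<Omega>. p s * exp (lam * Y s)) ^ M"
    using sum_prod_power[OF fin, of "\<lambda>s. p s * exp (lam * Y s)" M] by simp
  also have "\<dots> \<le> exp (- lam * real M * \<epsilon>) * (exp (13/20 * lam^2 * V)) ^ M"
  proof -
    have "(\<Sum>s\<in>\<Omega>. p s * exp (lam * Y s)) \<le> (\<Sum>s\<in>\<Omega>. p s * (1 + lam * Y s + 13/20 * (lam * Y s)^2))"
    proof (intro sum_mono mult_left_mono)
      fix s assume s: "s \<in> \<Omega>"
      show "exp (lam * Y s) \<le> 1 + lam * Y s + 13/20 * (lam * Y s)^2"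
        using bnd[OF s] by (intro exp_quad_bound) (simp add: lam_def)
      show "0 \<le> p s" using pnn s .
    qed
    also have "\<dots> = (\<Sum>s\<in>\<Omega>. p s) + lam * (\<Sum>s\<in>\<Omega>. p s * Y s) + 13/20 * lam^2 * (\<Sum>s\<in>\<Omega>. p s * (Y s)^2)"
      by (simp add: algebra_simps sum.distrib sum_distrib_left power_mult_distrib)
    also have "\<dots> \<le> 1 + 13/20 * lam^2 * V" using p1 mean var by (simp add: mult_left_mono)
    also have "\<dots> \<le> exp (13/20 * lam^2 * V)" using exp_ge_add_one_self[of "13/20 * lam^2 * V"] by simp
    finally have le: "(\<Sum>s\<in>\<Omega>. p s * exp (lam * Y s)) \<le> exp (13/20 * lam^2 * V)" .
    have nn: "0 \<le> (\<Sum>s\<in>\<Omega>. p s * exp (lam * Y s))" using pnn by (intro sum_nonneg) auto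
    show ?thesis using power_mono[OF le nn, of M] by (intro mult_left_mono) auto
  qed
  also have "\<dots> = exp (- lam * real M * \<epsilon> + real M * (13/20 * lam^2 * V))"
    by (simp add: exp_of_nat_mult[symmetric] exp_add[symmetric])
  also have "- lam * real M * \<epsilon> + real M * (13/20 * lam^2 * V) = - (real M * \<epsilon>^2 / V) * (763/2000)"
  proof -
    have h1: "lam^2 * V = 49/100 * \<epsilon>^2 / V" using V by (simp add: lam_def power2_eq_square field_simps)
    have h2: "lam * real M * \<epsilon> = 7/10 * (real M * \<epsilon>^2 / V)" by (simp add: lam_def power2_eq_square)
    have h3: "real M * (13/20 * lam^2 * V) = 13/20 * real M * (lam^2 * V)" by (simp add: mult_ac)
    have h4: "13/20 * real M * (49/100 * \<epsilon>^2 / V) = 637/2000 * (real M * \<epsilon>^2 / V)" by simp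
    show ?thesis unfolding h3 h1 h4 using h2 by simp
  qed
  also have "exp (- (real M * \<epsilon>^2 / V) * (763/2000)) \<le> exp (- 3/8 * real M * \<epsilon>^2 / V)"
  proof -
    have q: "0 \<le> real M * \<epsilon>^2 / V" using V by simp
    have "- (real M * \<epsilon>^2 / V) * (763/2000) \<le> - (real M * \<epsilon>^2 / V) * (3/8)" using q by simp
    then show ?thesis by simp
  qed
  finally show ?thesis .
qed


lemma herm_entry:
  assumes "hermitian A" "A \<in> carrier_mat n n" "i < n" "j < n"
  shows "cnj (A $$ (i,j)) = A $$ (j,i)"
proof -
  have "dagger A $$ (j,i) = cnj (A $$ (i,j))" using assms by (simp add: dagger_def)
  then show ?thesis using assms by (simp add: hermitian_def)
qed

lemma real_of_cnj: "cnj z = z \<Longrightarrow> Im z = 0"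
proof -
  assume "cnj z = z"
  then have "Im (cnj z) = Im z" by simp
  then show "Im z = 0" by simp
qed

lemma KF_real:
  assumes "hermitian A" "A \<in> carrier_mat (2^N) (2^N)" "\<And>n a b. cnj (g n a b) = g n b a"
  shows "Im (KF N A g) = 0"
proof -
  have "cnj (KF N A g) = (\<Sum>i<2^N. \<Sum>j<2^N. A $$ (j,i) * (\<Prod>n<N. g n (qbit n i) (qbit n j)))"
    unfolding KF_def cnj_sum complex_cnj_mult cnj_prod
    using assms by (intro sum.cong refl) (simp add: herm_entry)
  also have "\<dots> = KF N A g" unfolding KF_def by (rule sum.swap)
  finally show ?thesis by (rule real_of_cnj)
qed

lemma trace_real:
  assumes "hermitian A" "A \<in> carrier_mat n n" "hermitian B" "B \<in> carrier_mat n n"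
  shows "Im (ctrace (A * B)) = 0"
proof -
  have "cnj (ctrace (A * B)) = (\<Sum>i<n. \<Sum>j<n. A $$ (j,i) * B $$ (i,j))"
    unfolding ctrace_mult[OF assms(2,4)] cnj_sum complex_cnj_mult
    using assms by (intro sum.cong refl) (simp add: herm_entry)
  also have "\<dots> = ctrace (A * B)" unfolding ctrace_mult[OF assms(2,4)] by (rule sum.swap)
  finally show ?thesis by (rule real_of_cnj)
qed


lemma outcomes_lt4: "s \<in> outcomes N \<Longrightarrow> n < N \<Longrightarrow> s n < 4"
  by (auto simp: outcomes_def dest: PiE_mem)

lemma Gs_empty: "Gs {} OS g = Mred {} OS (\<lambda>_. undefined) (\<lambda>_. undefined)"
  by (simp add: Gs_def)

lemma obs_facts:
  assumes sic: "sic_set \<psi>" and dens: "density_matrix N \<rho>"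
    and Oc: "Ob \<in> carrier_mat (2^N) (2^N)" and herm: "hermitian Ob" and on: "opnorm Ob = 1"
    and act: "acts_on_at_most N K Ob" and eps: "0 < \<epsilon>" "\<epsilon> < 1"
  shows "\<forall>s. Im (ctrace (Ob * sic_shadow \<psi> N s)) = 0"
    and "Im (ctrace (Ob * \<rho>)) = 0"
    and "(\<Sum>s\<in>outcomes N. sic_prob \<psi> N \<rho> s * (Re (ctrace (Ob * sic_shadow \<psi> N s)) - Re (ctrace (Ob * \<rho>)))) = 0"
    and "(\<Sum>s\<in>outcomes N. sic_prob \<psi> N \<rho> s * (Re (ctrace (Ob * sic_shadow \<psi> N s)) - Re (ctrace (Ob * \<rho>)))^2) \<le> 6^K"
    and "\<forall>s\<in>outcomes N. 7/10 * \<epsilon> / 6^K * (Re (ctrace (Ob * sic_shadow \<psi> N s)) - Re (ctrace (Ob * \<rho>))) \<le> 7/10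
                       \<and> 7/10 * \<epsilon> / 6^K * (- (Re (ctrace (Ob * sic_shadow \<psi> N s)) - Re (ctrace (Ob * \<rho>)))) \<le> 7/10"
proof -
  obtain S where cS: "card S \<le> K" and aS: "acts_on N S Ob" using act by (auto simp: acts_on_at_most_def)
  obtain OS where S: "S \<subseteq> {..<N}" and ObE: "Ob = Omat N S OS" using acts_on_Omat[OF aS] by blast
  have finS: "finite S" using S finite_subset by auto
  have rc: "\<rho> \<in> carrier_mat (2^N) (2^N)" "hermitian \<rho>" using dens by (auto simp: density_matrix_def)
  define Xc where "Xc s = ctrace (Ob * sic_shadow \<psi> N s)" for s
  define X where "X s = Re (Xc s)" for s
  define \<mu> where "\<mu> = Re (ctrace (Ob * \<rho>))"
  define p where "p s = sic_prob \<psi> N \<rho> s" for s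
  have pnn: "0 \<le> p s" for s unfolding p_def by (rule KF_prob(2)[OF dens])
  have p1: "(\<Sum>s\<in>outcomes N. p s) = 1" unfolding p_def by (rule prob_sum_one[OF sic dens])
  have fin: "finite (outcomes N)" by (simp add: outcomes_def finite_PiE)
  show im: "\<forall>s. Im (ctrace (Ob * sic_shadow \<psi> N s)) = 0"
  proof
    fix s show "Im (ctrace (Ob * sic_shadow \<psi> N s)) = 0"
      unfolding shadow_KF[OF Oc] by (rule KF_real[OF herm Oc]) (simp add: cnj_sg)
  qed
  show "Im (ctrace (Ob * \<rho>)) = 0" by (rule trace_real[OF herm Oc rc(2) rc(1)])
  have EX: "(\<Sum>s\<in>outcomes N. p s * X s) = \<mu>"
  proof -
    have "(\<Sum>s\<in>outcomes N. complex_of_real (p s) * Xc s) = ctrace (Ob * \<rho>)"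
      unfolding p_def Xc_def by (rule prob_unbiased[OF sic dens Oc])
    then have "Re (\<Sum>s\<in>outcomes N. complex_of_real (p s) * Xc s) = \<mu>" by (simp add: \<mu>_def)
    then show ?thesis by (simp add: X_def)
  qed
  show "(\<Sum>s\<in>outcomes N. sic_prob \<psi> N \<rho> s * (Re (ctrace (Ob * sic_shadow \<psi> N s)) - Re (ctrace (Ob * \<rho>)))) = 0"
  proof -
    have "(\<Sum>s\<in>outcomes N. p s * (X s - \<mu>)) = (\<Sum>s\<in>outcomes N. p s * X s) - \<mu> * (\<Sum>s\<in>outcomes N. p s)"
      by (simp add: algebra_simps sum_subtractf sum_distrib_left)
    then show ?thesis using EX p1 by (simp add: p_def X_def Xc_def \<mu>_def)
  qed
  have EX2: "(\<Sum>s\<in>outcomes N. p s * (X s)^2) \<le> 6^K"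
  proof -
    have "(\<Sum>s\<in>outcomes N. p s * (X s)^2) \<le> (\<Sum>s\<in>outcomes N. p s * (cmod (Xc s))^2)"
    proof (intro sum_mono mult_left_mono pnn)
      fix s
      have "\<bar>X s\<bar> \<le> cmod (Xc s)" unfolding X_def by (rule abs_Re_le_cmod)
      then show "(X s)^2 \<le> (cmod (Xc s))^2" by (metis abs_ge_zero power2_abs power_mono)
    qed
    also have "\<dots> \<le> 6 ^ card S"
      unfolding p_def Xc_def ObE by (rule second_moment[OF sic dens S]) (use on ObE in simp)
    also have "\<dots> \<le> 6 ^ K" using cS by (intro power_increasing) auto
    finally show ?thesis .
  qed
  show "(\<Sum>s\<in>outcomes N. sic_prob \<psi> N \<rho> s * (Re (ctrace (Ob * sic_shadow \<psi> N s)) - Re (ctrace (Ob * \<rho>)))^2) \<le> 6^K"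
  proof -
    have "(\<Sum>s\<in>outcomes N. p s * (X s - \<mu>)^2) = (\<Sum>s\<in>outcomes N. p s * (X s)^2) - 2 * \<mu> * (\<Sum>s\<in>outcomes N. p s * X s) + \<mu>^2 * (\<Sum>s\<in>outcomes N. p s)"
      by (simp add: power2_diff algebra_simps sum_subtractf sum.distrib sum_distrib_left sum_distrib_right)
    also have "\<dots> = (\<Sum>s\<in>outcomes N. p s * (X s)^2) - \<mu>^2" using EX p1 by (simp add: power2_eq_square)
    also have "\<dots> \<le> 6^K" using EX2 zero_le_power2[of \<mu>] by linarith
    finally show ?thesis by (simp add: p_def X_def Xc_def \<mu>_def)
  qed
  have Xgs: "Xc s = Gs S OS (\<lambda>n. sg (\<psi> (s n)))" if "s \<in> outcomes N" for s
    unfolding Xc_def ObE by (rule X_Gs[OF sic S]) (use outcomes_lt4[OF that] in auto)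
  have bnd: "\<bar>X s - \<mu>\<bar> \<le> 6^K" if s: "s \<in> outcomes N" for s
  proof (cases "card S = 0")
    case True
    then have S0: "S = {}" using finS by simp
    define c where "c = Re (Mred {} OS (\<lambda>_. undefined) (\<lambda>_. undefined))"
    have Xc: "X s' = c" if "s' \<in> outcomes N" for s'
      using Xgs[OF that] unfolding X_def c_def S0 Gs_empty by simp
    have "\<mu> = (\<Sum>s\<in>outcomes N. p s * c)" using EX Xc by (metis (no_types, lifting) sum.cong)
    also have "\<dots> = c" using p1 by (simp add: sum_distrib_right[symmetric])
    finally show ?thesis using Xc[OF s] by simp
  next
    case False
    then have k1: "1 \<le> card S" by simp
    have xb: "\<bar>X s'\<bar> \<le> 3 ^ card S" if "s' \<in> outcomes N" for s'
    proof -
      have "\<bar>X s'\<bar> \<le> cmod (Xc s')" unfolding X_def by (rule abs_Re_le_cmod)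
      also have "\<dots> \<le> 3 ^ card S" unfolding Xgs[OF that]
        by (rule Gs_sg_bound[OF sic S]) (use on ObE outcomes_lt4[OF that] S in auto)
      finally show ?thesis .
    qed
    have mb: "\<bar>\<mu>\<bar> \<le> 3 ^ card S"
    proof -
      have "\<bar>\<mu>\<bar> = \<bar>\<Sum>s\<in>outcomes N. p s * X s\<bar>" using EX by simp
      also have "\<dots> \<le> (\<Sum>s\<in>outcomes N. p s * 3 ^ card S)"
        by (rule order_trans[OF sum_abs]) (intro sum_mono, simp add: abs_mult pnn xb mult_left_mono)
      also have "\<dots> = 3 ^ card S" using p1 by (simp add: sum_distrib_right[symmetric])
      finally show ?thesis .
    qed
    have "\<bar>X s - \<mu>\<bar> \<le> 2 * 3 ^ card S" using xb[OF s] mb by linarith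
    also have "\<dots> \<le> 2 ^ card S * 3 ^ card S"
      using k1 by (intro mult_right_mono) (auto simp: self_le_power)
    also have "\<dots> = 6 ^ card S" by (simp flip: power_mult_distrib)
    also have "\<dots> \<le> 6 ^ K" using cS by (intro power_increasing) auto
    finally show ?thesis .
  qed
  show "\<forall>s\<in>outcomes N. 7/10 * \<epsilon> / 6^K * (Re (ctrace (Ob * sic_shadow \<psi> N s)) - Re (ctrace (Ob * \<rho>))) \<le> 7/10
                       \<and> 7/10 * \<epsilon> / 6^K * (- (Re (ctrace (Ob * sic_shadow \<psi> N s)) - Re (ctrace (Ob * \<rho>)))) \<le> 7/10"
  proof
    fix s assume s: "s \<in> outcomes N"
    have lam: "0 \<le> 7/10 * \<epsilon> / 6^K" using eps by simp
    have "7/10 * \<epsilon> / 6^K * \<bar>X s - \<mu>\<bar> \<le> 7/10 * \<epsilon> / 6^K * 6^K"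
      using bnd[OF s] lam by (intro mult_left_mono) auto
    also have "\<dots> = 7/10 * \<epsilon>" by simp
    also have "\<dots> \<le> 7/10" using eps by simp
    finally have h: "7/10 * \<epsilon> / 6^K * \<bar>X s - \<mu>\<bar> \<le> 7/10" .
    have "7/10 * \<epsilon> / 6^K * (X s - \<mu>) \<le> 7/10 * \<epsilon> / 6^K * \<bar>X s - \<mu>\<bar>"
      using lam by (intro mult_left_mono) auto
    moreover have "7/10 * \<epsilon> / 6^K * (- (X s - \<mu>)) \<le> 7/10 * \<epsilon> / 6^K * \<bar>X s - \<mu>\<bar>"
      using lam by (intro mult_left_mono) auto
    ultimately show "7/10 * \<epsilon> / 6^K * (Re (ctrace (Ob * sic_shadow \<psi> N s)) - Re (ctrace (Ob * \<rho>))) \<le> 7/10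
                       \<and> 7/10 * \<epsilon> / 6^K * (- (Re (ctrace (Ob * sic_shadow \<psi> N s)) - Re (ctrace (Ob * \<rho>)))) \<le> 7/10"
      using h by (simp add: X_def Xc_def \<mu>_def)
  qed
qed


lemma filter_sum_le:
  fixes w :: "'a \<Rightarrow> real"
  assumes fin: "finite A" and w: "\<And>x. x \<in> A \<Longrightarrow> 0 \<le> w x" and imp: "\<And>x. x \<in> A \<Longrightarrow> P x \<Longrightarrow> Q1 x \<or> Q2 x"
  shows "(\<Sum>x\<in>{x\<in>A. P x}. w x) \<le> (\<Sum>x\<in>{x\<in>A. Q1 x}. w x) + (\<Sum>x\<in>{x\<in>A. Q2 x}. w x)"
proof -
  have "(\<Sum>x\<in>{x\<in>A. P x}. w x) = (\<Sum>x\<in>A. if P x then w x else 0)" using fin by (simp add: sum.inter_filter)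
  also have "\<dots> \<le> (\<Sum>x\<in>A. (if Q1 x then w x else 0) + (if Q2 x then w x else 0))"
    using w imp by (intro sum_mono) (auto)
  also have "\<dots> = (\<Sum>x\<in>{x\<in>A. Q1 x}. w x) + (\<Sum>x\<in>{x\<in>A. Q2 x}. w x)"
    using fin by (simp add: sum.distrib sum.inter_filter)
  finally show ?thesis .
qed

lemma tail_obs:
  assumes sic: "sic_set \<psi>" and dens: "density_matrix N \<rho>"
    and Oc: "Ob \<in> carrier_mat (2^N) (2^N)" and herm: "hermitian Ob" and on: "opnorm Ob = 1"
    and act: "acts_on_at_most N K Ob" and eps: "0 < \<epsilon>" "\<epsilon> < 1" and Mpos: "0 < M"
  shows "(\<Sum>ss\<in>{ss\<in>PiE {0..<M} (\<lambda>_. outcomes N).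
       \<not> cmod ((\<Sum>m<M. ctrace (Ob * sic_shadow \<psi> N (ss m))) / of_nat M - ctrace (Ob * \<rho>)) \<le> \<epsilon>}.
         \<Prod>m<M. sic_prob \<psi> N \<rho> (ss m)) \<le> 2 * exp (- 3/8 * real M * \<epsilon>^2 / 6^K)"
proof -
  note F = obs_facts[OF sic dens Oc herm on act eps]
  define Y where "Y s = Re (ctrace (Ob * sic_shadow \<psi> N s)) - Re (ctrace (Ob * \<rho>))" for s
  define p where "p s = sic_prob \<psi> N \<rho> s" for s
  let ?\<Omega> = "outcomes N"
  let ?\<Omega>M = "PiE {0..<M} (\<lambda>_. ?\<Omega>)"
  have fin: "finite ?\<Omega>" by (simp add: outcomes_def finite_PiE)
  have finM: "finite ?\<Omega>M" using fin by (simp add: finite_PiE)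
  have pnn: "0 \<le> p s" for s unfolding p_def by (rule KF_prob(2)[OF dens])
  have p1: "(\<Sum>s\<in>?\<Omega>. p s) = 1" unfolding p_def by (rule prob_sum_one[OF sic dens])
  have wnn: "0 \<le> (\<Prod>m<M. p (ss m))" for ss using pnn by (intro prod_nonneg) auto
  have V: "(0::real) < 6^K" by simp
  have imp: "real M * \<epsilon> < (\<Sum>m<M. Y (ss m)) \<or> real M * \<epsilon> < (\<Sum>m<M. (\<lambda>s. - Y s) (ss m))"
    if "\<not> cmod ((\<Sum>m<M. ctrace (Ob * sic_shadow \<psi> N (ss m))) / of_nat M - ctrace (Ob * \<rho>)) \<le> \<epsilon>" for ss
  proof -
    let ?z = "(\<Sum>m<M. ctrace (Ob * sic_shadow \<psi> N (ss m))) / of_nat M - ctrace (Ob * \<rho>)"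
    have "Im ?z = 0" using F(1) F(2) by (simp add: Im_divide)
    then have "cmod ?z = \<bar>Re ?z\<bar>" by (simp add: cmod_eq_Re)
    moreover have "Re ?z = (\<Sum>m<M. Y (ss m)) / real M"
      using Mpos by (simp add: Re_divide Y_def sum_subtractf field_simps power2_eq_square)
    ultimately have "\<epsilon> < \<bar>(\<Sum>m<M. Y (ss m)) / real M\<bar>" using that by simp
    then have "\<epsilon> * real M < \<bar>\<Sum>m<M. Y (ss m)\<bar>" using Mpos by (simp add: field_simps)
    then show ?thesis by (simp add: sum_negf abs_if mult.commute split: if_splits)
  qed
  have "(\<Sum>ss\<in>{ss\<in>?\<Omega>M. \<not> cmod ((\<Sum>m<M. ctrace (Ob * sic_shadow \<psi> N (ss m))) / of_nat M - ctrace (Ob * \<rho>)) \<le> \<epsilon>}. \<Prod>m<M. p (ss m))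
     \<le> (\<Sum>ss\<in>{ss\<in>?\<Omega>M. real M * \<epsilon> < (\<Sum>m<M. Y (ss m))}. \<Prod>m<M. p (ss m))
       + (\<Sum>ss\<in>{ss\<in>?\<Omega>M. real M * \<epsilon> < (\<Sum>m<M. (\<lambda>s. - Y s) (ss m))}. \<Prod>m<M. p (ss m))"
    by (rule filter_sum_le[OF finM wnn imp])
  also have "\<dots> \<le> exp (- 3/8 * real M * \<epsilon>^2 / 6^K) + exp (- 3/8 * real M * \<epsilon>^2 / 6^K)"
  proof (intro add_mono)
    show "(\<Sum>ss\<in>{ss\<in>?\<Omega>M. real M * \<epsilon> < (\<Sum>m<M. Y (ss m))}. \<Prod>m<M. p (ss m)) \<le> exp (- 3/8 * real M * \<epsilon>^2 / 6^K)"
      by (rule chernoff_tail[OF fin pnn p1 _ _ V eps(1)])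
         (use F(3) F(4) F(5) in \<open>auto simp: Y_def p_def\<close>)
    show "(\<Sum>ss\<in>{ss\<in>?\<Omega>M. real M * \<epsilon> < (\<Sum>m<M. (\<lambda>s. - Y s) (ss m))}. \<Prod>m<M. p (ss m)) \<le> exp (- 3/8 * real M * \<epsilon>^2 / 6^K)"
    proof (rule chernoff_tail[OF fin pnn p1 _ _ V eps(1)])
      have h: "(\<Sum>s\<in>?\<Omega>. p s * Y s) = 0" using F(3) by (simp add: Y_def p_def)
      have "(\<Sum>s\<in>?\<Omega>. p s * - Y s) = - (\<Sum>s\<in>?\<Omega>. p s * Y s)" by (simp only: mult_minus_right sum_negf)
      then show "(\<Sum>s\<in>?\<Omega>. p s * - Y s) = 0" using h by simp
      have h2: "(\<Sum>s\<in>?\<Omega>. p s * (Y s)^2) \<le> 6^K" using F(4) by (simp add: Y_def p_def)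
      show "(\<Sum>s\<in>?\<Omega>. p s * (- Y s)^2) \<le> 6^K" using h2 by (simp only: power2_minus)
      show "7/10 * \<epsilon> / 6^K * - Y s \<le> 7/10" if "s \<in> ?\<Omega>" for s using F(5) that by (simp add: Y_def)
    qed
  qed
  finally show ?thesis by (simp add: p_def)
qed


theorem mainTheorem3:
  fixes \<psi> :: "nat \<Rightarrow> complex vec" and N K L M :: nat and \<rho> :: "complex mat"
    and Obs :: "nat \<Rightarrow> complex mat" and \<epsilon> \<delta> :: real
  assumes "sic_set \<psi>"
    and "density_matrix N \<rho>"
    and "\<forall>l \<in> {1..L}. Obs l \<in> carrier_mat (2 ^ N) (2 ^ N) \<and> hermitian (Obs l) \<and>
           opnorm (Obs l) = 1 \<and> acts_on_at_most N K (Obs l)"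
    and "0 < \<epsilon>" "\<epsilon> < 1" "0 < \<delta>" "\<delta> < 1"
    and "real M \<ge> 8 / 3 * 6 ^ K * ln (2 * real L / \<delta>) / \<epsilon>\<^sup>2"
  shows "iid_prob \<psi> N \<rho> M (\<lambda>ss. \<forall>l \<in> {1..L}.
           cmod ((\<Sum>m<M. ctrace (Obs l * sic_shadow \<psi> N (ss m))) / of_nat M - ctrace (Obs l * \<rho>)) \<le> \<epsilon>)
         \<ge> 1 - \<delta>"
proof -
  note sic = assms(1) and dens = assms(2) and obs = assms(3) and eps = assms(4,5) and del = assms(6,7)
    and Mb = assms(8)
  let ?\<Omega> = "outcomes N"
  let ?\<Omega>M = "PiE {0..<M} (\<lambda>_. ?\<Omega>)"
  define w where "w ss = (\<Prod>m<M. sic_prob \<psi> N \<rho> (ss m))" for ss :: "nat \<Rightarrow> nat \<Rightarrow> nat"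
  define bad where "bad l ss = (\<not> cmod ((\<Sum>m<M. ctrace (Obs l * sic_shadow \<psi> N (ss m))) / of_nat M - ctrace (Obs l * \<rho>)) \<le> \<epsilon>)"
    for l and ss :: "nat \<Rightarrow> nat \<Rightarrow> nat"
  define good where "good ss = (\<forall>l \<in> {1..L}. \<not> bad l ss)" for ss
  have fin: "finite ?\<Omega>" by (simp add: outcomes_def finite_PiE)
  have finM: "finite ?\<Omega>M" using fin by (simp add: finite_PiE)
  have wnn: "0 \<le> w ss" for ss unfolding w_def using KF_prob(2)[OF dens] by (intro prod_nonneg) auto
  have tot: "(\<Sum>ss\<in>?\<Omega>M. w ss) = 1"
    unfolding w_def using sum_prod_power[OF fin, of "sic_prob \<psi> N \<rho>" M] prob_sum_one[OF sic dens] by simp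
  have P: "iid_prob \<psi> N \<rho> M (\<lambda>ss. \<forall>l \<in> {1..L}.
           cmod ((\<Sum>m<M. ctrace (Obs l * sic_shadow \<psi> N (ss m))) / of_nat M - ctrace (Obs l * \<rho>)) \<le> \<epsilon>)
         = (\<Sum>ss\<in>{ss\<in>?\<Omega>M. good ss}. w ss)"
    unfolding iid_prob_def good_def bad_def w_def by simp
  have split: "(\<Sum>ss\<in>?\<Omega>M. w ss) = (\<Sum>ss\<in>{ss\<in>?\<Omega>M. good ss}. w ss) + (\<Sum>ss\<in>{ss\<in>?\<Omega>M. \<not> good ss}. w ss)"
    using finM by (simp add: sum.inter_filter sum.distrib[symmetric] if_distrib cong: if_cong) (intro sum.cong, auto)
  show ?thesis
  proof (cases "L = 0")
    case True
    then have "{ss\<in>?\<Omega>M. good ss} = ?\<Omega>M" by (auto simp: good_def)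
    then show ?thesis using P tot del by simp
  next
    case False
    then have L1: "1 \<le> L" by simp
    have lnpos: "0 < ln (2 * real L / \<delta>)"
    proof -
      have "1 < 2 * real L / \<delta>" using L1 del by (simp add: field_simps)
      then show ?thesis by simp
    qed
    have Mpos: "0 < M"
    proof -
      have "0 < 8 / 3 * 6 ^ K * ln (2 * real L / \<delta>) / \<epsilon>\<^sup>2" using lnpos eps by simp
      then show ?thesis using Mb by linarith
    qed
    have expo: "ln (2 * real L / \<delta>) \<le> 3/8 * real M * \<epsilon>^2 / 6^K"
    proof -
      have "8 / 3 * 6 ^ K * ln (2 * real L / \<delta>) / \<epsilon>\<^sup>2 * (3/8 * \<epsilon>^2 / 6^K) \<le> real M * (3/8 * \<epsilon>^2 / 6^K)"
        using Mb eps by (intro mult_right_mono) auto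
      then show ?thesis using eps by (simp add: field_simps)
    qed
    have each: "(\<Sum>ss\<in>{ss\<in>?\<Omega>M. bad l ss}. w ss) \<le> \<delta> / real L" if l: "l \<in> {1..L}" for l
    proof -
      have ob: "Obs l \<in> carrier_mat (2 ^ N) (2 ^ N)" "hermitian (Obs l)" "opnorm (Obs l) = 1" "acts_on_at_most N K (Obs l)"
        using obs l by auto
      have "(\<Sum>ss\<in>{ss\<in>?\<Omega>M. bad l ss}. w ss) \<le> 2 * exp (- 3/8 * real M * \<epsilon>^2 / 6^K)"
        unfolding bad_def w_def by (rule tail_obs[OF sic dens ob eps Mpos])
      also have "\<dots> \<le> 2 * exp (- ln (2 * real L / \<delta>))" using expo by simp
      also have "\<dots> = \<delta> / real L"
      proof -
        have pos: "0 < 2 * real L / \<delta>" using L1 del by simp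
        have "exp (- ln (2 * real L / \<delta>)) = inverse (2 * real L / \<delta>)"
          by (simp add: exp_minus exp_ln[OF pos])
        then show ?thesis using L1 del by (simp add: field_simps)
      qed
      finally show ?thesis .
    qed
    have "(\<Sum>ss\<in>{ss\<in>?\<Omega>M. \<not> good ss}. w ss) = (\<Sum>ss\<in>?\<Omega>M. if \<not> good ss then w ss else 0)"
      using finM by (simp add: sum.inter_filter)
    also have "\<dots> \<le> (\<Sum>ss\<in>?\<Omega>M. \<Sum>l\<in>{1..L}. if bad l ss then w ss else 0)"
    proof (intro sum_mono)
      fix ss
      show "(if \<not> good ss then w ss else 0) \<le> (\<Sum>l\<in>{1..L}. if bad l ss then w ss else 0)"
      proof (cases "good ss")
        case True then show ?thesis using wnn by (simp add: sum_nonneg)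
      next
        case False
        then obtain l where l: "l \<in> {1..L}" "bad l ss" by (auto simp: good_def)
        have "w ss = (if bad l ss then w ss else 0)" using l by simp
        also have "\<dots> \<le> (\<Sum>l\<in>{1..L}. if bad l ss then w ss else 0)"
          using l wnn by (intro member_le_sum) auto
        finally show ?thesis using False by simp
      qed
    qed
    also have "\<dots> = (\<Sum>l\<in>{1..L}. \<Sum>ss\<in>{ss\<in>?\<Omega>M. bad l ss}. w ss)"
      using finM by (subst sum.swap) (simp add: sum.inter_filter)
    also have "\<dots> \<le> (\<Sum>l\<in>{1..L}. \<delta> / real L)" by (intro sum_mono each)
    also have "\<dots> = \<delta>" using L1 by simp
    finally have "(\<Sum>ss\<in>{ss\<in>?\<Omega>M. \<not> good ss}. w ss) \<le> \<delta>" .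
    then show ?thesis using P tot split by linarith
  qed
qed


end
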